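(* Let $d\in\mathbb{N}_+$ and let $u:\mathbb{R}\times\mathbb{R}^d\to\mathbb{R}^d$ be a real vector field with $\tilde u:=\mathcal{F}_{t,x}u$, for which the integrals below are well defined. For any $f\in C^\infty_c(\mathbb{R}^{1+2d})$, any nonnegative $\chi(\tau,\xi,\eta)\in C_b^\infty(\mathbb{R}^{1+2d})$, and any constants $s,r\ge0$, $$\int \chi\, |\xi|^2\langle\xi\rangle^{2s-2}\langle\eta\rangle^{-2-2r}\left(1+(1-2r)|\eta|^2\right)|\hat{f}|^2\le \int|\nabla_\eta\chi|\langle\xi\rangle^{2s}\langle\eta\rangle^{1-2r}|\hat{f}|^2+ 2\left| \int \chi\,\xi\cdot\eta\,\langle\xi\rangle^{2s-2}\langle\eta\rangle^{-2r}X\hat{f}\, \overline{\hat{f}}\,\right|+ 2\,\mathrm{Im} \int \chi\,\xi\cdot\eta\,\langle\xi\rangle^{2s-2}\langle\eta\rangle^{-2r}\xi\cdot(\tilde{u}*_{\tau,\xi}\hat{f})\, \overline{\hat{f}},$$ and $$\int \chi |\tau|^2\langle\tau\rangle^{2s-2}\langle\eta\rangle^{-2r} |\hat{f}|^2= -\mathrm{Re} \int \chi\,\tau\langle\tau\rangle^{2s-2}\langle\eta\rangle^{-2r} \xi\cdot\widehat{vf}\,\overline{\hat{f}}+\mathrm{Im}\int\chi\,\tau\langle\tau\rangle^{2s-2}\langle\eta\rangle^{-2r} X\hat{f}\,\overline{\hat{f}}-\mathrm{Re} \int\chi\,\tau\langle\tau\rangle^{2s-2}\langle\eta\rangle^{-2r}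 \xi\cdot(\tilde{u}*_{\tau,\xi}\hat{f})\,\overline{\hat{f}}.$$
   Context: $\hat{\cdot}$ denotes the Fourier transform in all variables $(t,x,v)\mapsto(\tau,\xi,\eta)$ (with the convention $\widehat{\partial_t f}=i\tau\hat f$, $\widehat{vf}=i\nabla_\eta\hat f$), $\mathcal{F}_{t,x}$ the Fourier transform in $(t,x)\mapsto(\tau,\xi)$, and $*_{\tau,\xi}$ convolution in $(\tau,\xi)$, normalized so that $\mathcal{F}_{t,x}(uf)=\tilde u*_{\tau,\xi}\mathcal{F}_{t,x}f$. $\int$ means integration over $(\tau,\xi,\eta)\in\mathbb{R}\times\mathbb{R}^d\times\mathbb{R}^d$, $\langle\cdot\rangle=(1+|\cdot|^2)^{1/2}$, and $X$ is the operator $X\hat f:=i\tau\hat f-\xi\cdot\nabla_\eta\hat f+i\xi\cdot(\tilde u*_{\tau,\xi}\hat f)$ (the Fourier transform of $\partial_tf+\nabla_x\cdot(vf+uf)$). *)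

theory Defs
  imports "HOL-Analysis.Analysis"
begin

text \<open>Phase space points (t,x,v) and frequency points (tau,xi,eta) both live in
  real \<times> (real^'d) \<times> (real^'d).\<close>

type_synonym 'd pt = "real \<times> (real^'d) \<times> (real^'d)"

definition jbr :: "'a::real_normed_vector \<Rightarrow> real" where
  "jbr a = sqrt (1 + (norm a)\<^sup>2)"

definition dirderiv :: "('a::real_normed_vector \<Rightarrow> 'b::real_normed_vector) \<Rightarrow> 'a \<Rightarrow> 'a \<Rightarrow> 'b" where
  "dirderiv g e p = vector_derivative (\<lambda>h::real. g (p + h *\<^sub>R e)) (at 0)"

fun iter_pd :: "'a::real_normed_vector list \<Rightarrow> ('a \<Rightarrow> 'b::real_normed_vector) \<Rightarrow> 'a \<Rightarrow> 'b" where
  "iter_pd [] g = g"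
| "iter_pd (e # es) g = dirderiv (iter_pd es g) e"

text \<open>C^\<infinity>: every iterated partial derivative (along basis directions) exists and is
  (Frechet) differentiable everywhere; hence all partials of all orders are continuous.\<close>
definition smooth :: "('a::euclidean_space \<Rightarrow> 'b::real_normed_vector) \<Rightarrow> bool" where
  "smooth g \<longleftrightarrow> (\<forall>es. set es \<subseteq> Basis \<longrightarrow> (\<forall>p. iter_pd es g differentiable (at p)))"

definition smooth_compact_support :: "('a::euclidean_space \<Rightarrow> 'b::real_normed_vector) \<Rightarrow> bool" where
  "smooth_compact_support g \<longleftrightarrow> smooth g \<and> compact (closure {p. g p \<noteq> 0})"

definition smooth_bounded :: "('a::euclidean_space \<Rightarrow> 'b::real_normed_vector) \<Rightarrow> bool" where
  "smooth_bounded g \<longleftrightarrow> smooth g \<and> (\<forall>es. set es \<subseteq> Basis \<longrightarrow> bounded (range (iter_pd es g)))"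

text \<open>Fourier transform in all variables (t,x,v) \<mapsto> (tau,xi,eta):
  \<open>\<hat>g(\<omega>) = \<integral> e^{-i p\<cdot>\<omega>} g(p) dp\<close>, so that \<open>\<partial>_t \<mapsto> i\<tau>\<close> and \<open>v \<mapsto> i\<nabla>_\<eta>\<close>.\<close>
definition FT :: "('d::finite pt \<Rightarrow> complex) \<Rightarrow> 'd pt \<Rightarrow> complex" where
  "FT g \<omega> = (LINT p|lborel. cis (- (p \<bullet> \<omega>)) * g p)"

definition fhat :: "('d::finite pt \<Rightarrow> real) \<Rightarrow> 'd pt \<Rightarrow> complex" where
  "fhat f = FT (\<lambda>p. complex_of_real (f p))"

text \<open>j-th component of \<open>\<tilde>u *_{\<tau>,\<xi>} \<hat>f\<close>; by the stated normalization
  \<open>\<F>_{t,x}(u f) = \<tilde>u * \<F>_{t,x} f\<close> (and since u does not depend on v)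
  this is the full Fourier transform of \<open>u_j f\<close>.\<close>
definition uconv :: "(real \<times> (real^'d) \<Rightarrow> real^'d) \<Rightarrow> ('d::finite pt \<Rightarrow> real) \<Rightarrow> 'd \<Rightarrow> 'd pt \<Rightarrow> complex" where
  "uconv u f j = FT (\<lambda>p. complex_of_real (u (fst p, fst (snd p)) $ j * f p))"

definition vfhat :: "('d::finite pt \<Rightarrow> real) \<Rightarrow> 'd \<Rightarrow> 'd pt \<Rightarrow> complex" where
  "vfhat f j = FT (\<lambda>p. complex_of_real (snd (snd p) $ j * f p))"

definition deta :: "('d::finite pt \<Rightarrow> 'b::real_normed_vector) \<Rightarrow> 'd \<Rightarrow> 'd pt \<Rightarrow> 'b" where
  "deta g j = dirderiv g (0, 0, axis j 1)"

definition grad_eta :: "('d::finite pt \<Rightarrow> real) \<Rightarrow> 'd pt \<Rightarrow> real^'d" where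
  "grad_eta g \<omega> = (\<chi> j. deta g j \<omega>)"

definition Xop :: "(real \<times> (real^'d) \<Rightarrow> real^'d) \<Rightarrow> ('d::finite pt \<Rightarrow> real) \<Rightarrow> 'd pt \<Rightarrow> complex" where
  "Xop u f \<omega> = (case \<omega> of (\<tau>, \<xi>, \<eta>) \<Rightarrow>
      \<i> * of_real \<tau> * fhat f \<omega>
      - (\<Sum>j\<in>UNIV. of_real (\<xi> $ j) * deta (fhat f) j \<omega>)
      + \<i> * (\<Sum>j\<in>UNIV. of_real (\<xi> $ j) * uconv u f j \<omega>))"

end

theory Submission
  imports Defs "HOL-Analysis.Analysis"
begin


lemma summable_decay_aux:
  fixes n N :: nat assumes "n + 2 \<le> 2 * N"
  shows "summable (\<lambda>k::nat. inverse ((1 + (real k)\<^sup>2) ^ N) * (2 * (real k + 1)) ^ n)"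
proof -
  have s: "summable (\<lambda>k::nat. 2 ^ (N + n) * inverse ((real k + 1) ^ 2))"
  proof -
    have "summable (\<lambda>k::nat. inverse (real k ^ 2))"
      using inverse_power_summable[of 2, where 'a=real] by simp
    then have "summable (\<lambda>k::nat. inverse (real (Suc k) ^ 2))"
      by (subst summable_Suc_iff)
    then show ?thesis by (intro summable_mult) (simp add: add.commute)
  qed
  show ?thesis
  proof (rule summable_comparison_test'[OF s])
    fix k :: nat
    define a where "a = real k + 1"
    have a1: "a \<ge> 1" by (simp add: a_def)
    have h1: "(1 + (real k)\<^sup>2) \<ge> a\<^sup>2 / 2"
    proof -
      have sq: "0 \<le> (real k - 1)*(real k - 1)" by simp
      then show ?thesis unfolding a_def by (simp add: power2_eq_square field_simps)
    qed
    have h2: "(1 + (real k)\<^sup>2) ^ N \<ge> (a\<^sup>2 / 2) ^ N"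
      by (rule power_mono[OF h1]) (simp)
    have pos: "(a\<^sup>2 / 2) ^ N > 0" using a1 by simp
    have "inverse ((1 + (real k)\<^sup>2) ^ N) \<le> inverse ((a\<^sup>2 / 2) ^ N)"
      using h2 pos by (simp add: le_imp_inverse_le)
    also have "\<dots> = 2 ^ N / a ^ (2 * N)"
      by (simp add: power_divide power_mult field_simps flip: power_mult)
    finally have i1: "inverse ((1 + (real k)\<^sup>2) ^ N) \<le> 2 ^ N / a ^ (2 * N)" .
    have "a ^ (n + 2) \<le> a ^ (2 * N)" using a1 assms by (intro power_increasing) auto
    then have "a ^ n * a ^ 2 \<le> a ^ (2 * N)" by (simp only: power_add)
    then have i2: "a ^ n / a ^ (2 * N) \<le> inverse (a ^ 2)"
      using a1 by (simp add: field_simps)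
    have "norm (inverse ((1 + (real k)\<^sup>2) ^ N) * (2 * (real k + 1)) ^ n)
        = inverse ((1 + (real k)\<^sup>2) ^ N) * (2 ^ n * a ^ n)"
    proof -
      have e: "(2 * (real k + 1)) ^ n = 2 ^ n * a ^ n" unfolding a_def by (rule power_mult_distrib)
      show ?thesis unfolding e real_norm_def by (rule abs_of_nonneg) (simp add: a_def)
    qed
    also have "\<dots> \<le> 2 ^ N / a ^ (2 * N) * (2 ^ n * a ^ n)"
      by (rule mult_right_mono[OF i1]) (use a1 in simp)
    also have "\<dots> = 2 ^ (N + n) * (a ^ n / a ^ (2 * N))"
      by (simp add: power_add field_simps)
    also have "\<dots> \<le> 2 ^ (N + n) * inverse (a ^ 2)"
      by (rule mult_left_mono[OF i2]) simp
    finally show "norm (inverse ((1 + (real k)\<^sup>2) ^ N) * (2 * (real k + 1)) ^ n)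
        \<le> 2 ^ (N + n) * inverse ((real k + 1) ^ 2)" by (simp add: a_def)
  qed
qed

lemma integrable_decay_basic:
  assumes "DIM('a) + 2 \<le> 2 * N"
  shows "integrable lborel (\<lambda>x::'a::euclidean_space. inverse ((1 + (norm x)\<^sup>2) ^ N))"
proof -
  define n where "n = DIM('a)"
  define c where "c k = inverse ((1 + (real k)\<^sup>2) ^ N)" for k :: nat
  define B where "B k = cbox (- ((real k + 1) *\<^sub>R One)) ((real k + 1) *\<^sub>R (One::'a))" for k :: nat
  have meas: "(\<lambda>x::'a. inverse ((1 + (norm x)\<^sup>2) ^ N)) \<in> borel_measurable lborel"
    by measurable
  have pt: "ennreal (inverse ((1 + (norm x)\<^sup>2) ^ N)) \<le> (\<Sum>k. ennreal (c k) * indicator (B k) x)" for x :: 'a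
  proof -
    define k where "k = nat \<lfloor>norm x\<rfloor>"
    have kk: "real k = of_int \<lfloor>norm x\<rfloor>" unfolding k_def by simp
    have k1: "real k \<le> norm x" unfolding kk by linarith
    have k2: "norm x < real k + 1" unfolding kk by linarith
    have "x \<in> B k" unfolding B_def mem_box
    proof (intro ballI conjI)
      fix b :: 'a assume b: "b \<in> Basis"
      have "\<bar>x \<bullet> b\<bar> \<le> norm x" using Basis_le_norm[OF b] .
      then show "(- ((real k + 1) *\<^sub>R One)) \<bullet> b \<le> x \<bullet> b" "x \<bullet> b \<le> ((real k + 1) *\<^sub>R One) \<bullet> b"
        using b k2 by (auto simp: inner_minus_left abs_le_iff)
    qed
    have "(real k)\<^sup>2 \<le> (norm x)\<^sup>2" using k1 by (simp add: power_mono)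
    then have "(1 + (real k)\<^sup>2) ^ N \<le> (1 + (norm x)\<^sup>2) ^ N" by (intro power_mono) auto
    then have "inverse ((1 + (norm x)\<^sup>2) ^ N) \<le> c k" unfolding c_def
      by (intro le_imp_inverse_le) (auto intro!: zero_less_power add_pos_nonneg)
    then have "ennreal (inverse ((1 + (norm x)\<^sup>2) ^ N)) \<le> ennreal (c k) * indicator (B k) x"
      using \<open>x \<in> B k\<close> by (simp add: ennreal_leI)
    also have "\<dots> \<le> (\<Sum>k. ennreal (c k) * indicator (B k) x)"
    proof -
      define F where "F i = ennreal (c i) * indicator (B i) x" for i
      have "(\<Sum>i\<in>{k}. F i) \<le> suminf F"
        by (rule sum_le_suminf) (auto intro: summableI)
      then show ?thesis unfolding F_def[symmetric] by simp
    qed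
    finally show ?thesis .
  qed
  have "(\<integral>\<^sup>+x. ennreal (inverse ((1 + (norm (x::'a))\<^sup>2) ^ N)) \<partial>lborel)
      \<le> (\<integral>\<^sup>+x. (\<Sum>k. ennreal (c k) * indicator (B k) x) \<partial>lborel)"
    by (rule nn_integral_mono, rule pt)
  also have "\<dots> = (\<Sum>k. \<integral>\<^sup>+x. ennreal (c k) * indicator (B k) x \<partial>lborel)"
    by (intro nn_integral_suminf) (auto simp: B_def)
  also have "\<dots> = (\<Sum>k. ennreal (c k * (2 * (real k + 1)) ^ n))"
  proof (intro suminf_cong)
    fix k
    have "emeasure lborel (B k) = ennreal ((2 * (real k + 1)) ^ n)"
    proof -
      have "(\<Prod>b\<in>Basis. ((real k + 1) *\<^sub>R One + (real k + 1) *\<^sub>R (One::'a)) \<bullet> b) = (\<Prod>b\<in>(Basis::'a set). 2 * (real k + 1))"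
        by (intro prod.cong) (auto simp: inner_add_left)
      then show ?thesis unfolding B_def n_def
        by (subst emeasure_lborel_cbox_eq) (auto simp: inner_minus_left prod_constant)
    qed
    then show "(\<integral>\<^sup>+x. ennreal (c k) * indicator (B k) x \<partial>lborel) = ennreal (c k * (2 * (real k + 1)) ^ n)"
      by (subst nn_integral_cmult_indicator) (auto simp: B_def c_def ennreal_mult)
  qed
  also have "\<dots> = ennreal (\<Sum>k. c k * (2 * (real k + 1)) ^ n)"
    by (intro suminf_ennreal2) (use summable_decay_aux[of n N] assms in \<open>auto simp: n_def c_def\<close>)
  also have "\<dots> < \<infinity>" by simp
  finally show ?thesis
    by (intro integrableI_bounded meas) simp
qed


lemma vd_iff:
  fixes f :: "real \<Rightarrow> 'b::real_normed_vector"
  shows "(f has_vector_derivative D) (at x) \<longleftrightarrow> ((\<lambda>h. (f (x + h) - f x) /\<^sub>R h) \<longlongrightarrow> D) (at 0)"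
proof -
  have bl: "bounded_linear (\<lambda>h::real. h *\<^sub>R D)" by (rule bounded_linear_scaleR_left)
  have eq: "\<forall>\<^sub>F h in at 0. norm (f (x + h) - f x - h *\<^sub>R D) / norm h = norm ((f (x + h) - f x) /\<^sub>R h - D)"
  proof (rule eventually_mono[OF eventually_neq_at_within[of 0 0 UNIV]])
    fix h :: real assume "h \<noteq> 0"
    then have "(f (x + h) - f x) /\<^sub>R h - D = (1 / h) *\<^sub>R (f (x + h) - f x - h *\<^sub>R D)"
      by (simp add: algebra_simps divide_inverse_commute)
    then show "norm (f (x + h) - f x - h *\<^sub>R D) / norm h = norm ((f (x + h) - f x) /\<^sub>R h - D)"
      by (simp add: divide_inverse mult.commute)
  qed
  have "(f has_vector_derivative D) (at x) \<longleftrightarrow> ((\<lambda>h. norm (f (x + h) - f x - h *\<^sub>R D) / norm h) \<longlongrightarrow> 0) (at 0)"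
    unfolding has_vector_derivative_def has_derivative_at using bl by simp
  also have "\<dots> \<longleftrightarrow> ((\<lambda>h. norm ((f (x + h) - f x) /\<^sub>R h - D)) \<longlongrightarrow> 0) (at 0)"
    by (rule tendsto_cong[OF eq])
  also have "\<dots> \<longleftrightarrow> ((\<lambda>h. (f (x + h) - f x) /\<^sub>R h) \<longlongrightarrow> D) (at 0)"
    by (simp add: tendsto_norm_zero_iff LIM_zero_iff)
  finally show ?thesis .
qed

lemma DC0:
  fixes s :: "real \<Rightarrow> 'a \<Rightarrow> 'b::{banach, second_countable_topology}"
  assumes meas: "\<And>t. s t \<in> borel_measurable M" "f \<in> borel_measurable M"
    and w: "integrable M w"
    and lim: "\<And>x. ((\<lambda>t. s t x) \<longlongrightarrow> f x) (at 0)"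
    and bnd: "\<And>t x. t \<noteq> 0 \<Longrightarrow> \<bar>t\<bar> \<le> 1 \<Longrightarrow> norm (s t x) \<le> w x"
  shows "((\<lambda>t. integral\<^sup>L M (s t)) \<longlongrightarrow> integral\<^sup>L M f) (at 0)"
  unfolding tendsto_at_iff_sequentially[where s=UNIV]
proof (intro allI impI)
  fix X :: "nat \<Rightarrow> real" assume X0: "\<forall>i. X i \<in> UNIV - {0}" and X: "X \<longlonglongrightarrow> 0"
  then have "\<forall>\<^sub>F n in sequentially. norm (X n) < 1"
    using order_tendstoD(2)[OF tendsto_norm_zero[OF X], of 1] by simp
  then obtain N where N: "\<And>n. n \<ge> N \<Longrightarrow> \<bar>X n\<bar> < 1"
    by (auto simp: eventually_sequentially)
  have XA: "filterlim X (at 0) sequentially"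
    using X X0 by (auto simp: filterlim_at eventually_sequentially)
  show "((\<lambda>t. integral\<^sup>L M (s t)) \<circ> X) \<longlonglongrightarrow> integral\<^sup>L M f"
    unfolding comp_def
  proof (rule LIMSEQ_offset[where k=N], rule integral_dominated_convergence[where w=w])
    show "AE x in M. (\<lambda>n. s (X (n + N)) x) \<longlonglongrightarrow> f x"
    proof (intro AE_I2)
      fix x
      have "(\<lambda>n. s (X n) x) \<longlonglongrightarrow> f x"
        using filterlim_compose[OF lim XA] .
      then show "(\<lambda>n. s (X (n + N)) x) \<longlonglongrightarrow> f x"
        by (rule LIMSEQ_ignore_initial_segment)
    qed
    show "AE x in M. norm (s (X (n + N)) x) \<le> w x" for n
      using bnd[of "X (n + N)"] N[of "n + N"] X0 by auto
  qed (use meas w in auto)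
qed


lemma onorm_scaleR_vec: "onorm (\<lambda>h::real. h *\<^sub>R (v::'b::real_normed_vector)) = norm v"
  using onorm_scaleR_left[OF bounded_linear_ident, of v] by (simp add: onorm_id[unfolded id_def])

lemma IBP0:
  fixes g :: "'a::euclidean_space \<Rightarrow> 'b::{banach, second_countable_topology}" and e :: 'a
  assumes gi: "integrable lborel g"
    and Dm: "D \<in> borel_measurable lborel"
    and H: "integrable lborel H"
    and der: "\<And>x. ((\<lambda>s. g (x + s *\<^sub>R e)) has_vector_derivative D x) (at 0)"
    and bnd: "\<And>x s. \<bar>s\<bar> \<le> 1 \<Longrightarrow> norm (D (x + s *\<^sub>R e)) \<le> H x"
  shows "integral\<^sup>L lborel D = 0"
proof -
  define Q where "Q t x = (g (x + t *\<^sub>R e) - g x) /\<^sub>R t" for t x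
  have gm[measurable]: "g \<in> borel_measurable borel" using gi by auto
  have shift_int: "integrable lborel (\<lambda>x. g (x + c))" "integral\<^sup>L lborel (\<lambda>x. g (x + c)) = integral\<^sup>L lborel g" for c :: 'a
  proof -
    have "integrable (distr lborel borel ((+) c)) g" using gi by (simp add: lborel_distr_plus)
    then show "integrable lborel (\<lambda>x. g (x + c))"
      by (subst (asm) integrable_distr_eq) (auto simp: add.commute)
    have "integral\<^sup>L lborel g = integral\<^sup>L (distr lborel borel ((+) c)) g" by (simp add: lborel_distr_plus)
    also have "\<dots> = integral\<^sup>L lborel (\<lambda>x. g (c + x))" by (rule integral_distr) auto
    finally show "integral\<^sup>L lborel (\<lambda>x. g (x + c)) = integral\<^sup>L lborel g" by (simp add: add.commute)
  qed
  have Q0: "integral\<^sup>L lborel (Q t) = 0" for t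
  proof -
    have "integral\<^sup>L lborel (Q t) = (integral\<^sup>L lborel (\<lambda>x. g (x + t *\<^sub>R e)) - integral\<^sup>L lborel g) /\<^sub>R t"
      unfolding Q_def by (simp add: shift_int(1) gi)
    then show ?thesis by (simp add: shift_int(2))
  qed
  have Qm: "Q t \<in> borel_measurable lborel" for t
    unfolding Q_def by measurable
  have lim: "((\<lambda>t. Q t x) \<longlongrightarrow> D x) (at 0)" for x
    using der[of x] unfolding vd_iff Q_def by simp
  have bd: "norm (Q t x) \<le> H x" if t: "t \<noteq> 0" "\<bar>t\<bar> \<le> 1" for t x
  proof -
    have "norm (g (x + t *\<^sub>R e) - g (x + 0 *\<^sub>R e)) \<le> H x * norm (t - 0)"
    proof (rule differentiable_bound[where S="{-1..1}" and f="\<lambda>s. g (x + s *\<^sub>R e)"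
          and f'="\<lambda>s h. h *\<^sub>R D (x + s *\<^sub>R e)"])
      fix s :: real assume s: "s \<in> {-1..1}"
      have "((\<lambda>h. (g ((x + s *\<^sub>R e) + (0 + h) *\<^sub>R e) - g ((x + s *\<^sub>R e) + 0 *\<^sub>R e)) /\<^sub>R h) \<longlongrightarrow> D (x + s *\<^sub>R e)) (at 0)"
        using der[of "x + s *\<^sub>R e"] unfolding vd_iff by simp
      then have "((\<lambda>s'. g (x + s' *\<^sub>R e)) has_vector_derivative D (x + s *\<^sub>R e)) (at s)"
        unfolding vd_iff by (simp add: scaleR_add_left add.assoc)
      then show "((\<lambda>s. g (x + s *\<^sub>R e)) has_derivative (\<lambda>h. h *\<^sub>R D (x + s *\<^sub>R e))) (at s within {-1..1})"
        unfolding has_vector_derivative_def by (rule has_derivative_at_withinI)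
      show "onorm (\<lambda>h. h *\<^sub>R D (x + s *\<^sub>R e)) \<le> H x"
        unfolding onorm_scaleR_vec using bnd s by auto
    qed (use t in auto)
    then have "norm (g (x + t *\<^sub>R e) - g x) \<le> H x * \<bar>t\<bar>" by simp
    then show ?thesis unfolding Q_def norm_scaleR using t by (simp add: field_simps abs_inverse)
  qed
  have "((\<lambda>t. integral\<^sup>L lborel (Q t)) \<longlongrightarrow> integral\<^sup>L lborel D) (at 0)"
    by (rule DC0[OF Qm Dm H lim bd])
  then have "((\<lambda>t::real. 0) \<longlongrightarrow> integral\<^sup>L lborel D) (at 0)" by (simp add: Q0)
  then show ?thesis by (rule LIM_const_eq[symmetric])
qed


lemma diff_dirderiv:
  fixes g :: "'a::real_normed_vector \<Rightarrow> 'b::real_normed_vector"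
  assumes "g differentiable (at p)"
  shows "((\<lambda>h. g (p + h *\<^sub>R e)) has_vector_derivative dirderiv g e p) (at 0)"
proof -
  obtain g' where g': "(g has_derivative g') (at p)" using assms by (auto simp: differentiable_def)
  have "((\<lambda>h::real. p + h *\<^sub>R e) has_derivative (\<lambda>h. h *\<^sub>R e)) (at 0)"
    by (auto intro!: derivative_eq_intros)
  moreover have "(g has_derivative g') (at (p + 0 *\<^sub>R e))" using g' by simp
  ultimately have "((\<lambda>h. g (p + h *\<^sub>R e)) has_derivative (\<lambda>h. g' (h *\<^sub>R e))) (at 0)"
    by (rule has_derivative_compose[of "\<lambda>h. p + h *\<^sub>R e"])
  moreover have "(\<lambda>h. g' (h *\<^sub>R e)) = (\<lambda>h. h *\<^sub>R g' e)"
    using has_derivative_bounded_linear[OF g'] by (simp add: linear_simps(5) bounded_linear.linear linear_scale)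
  ultimately have *: "((\<lambda>h. g (p + h *\<^sub>R e)) has_vector_derivative g' e) (at 0)"
    by (simp add: has_vector_derivative_def)
  then have "dirderiv g e p = g' e" unfolding dirderiv_def by (rule vector_derivative_at)
  with * show ?thesis by simp
qed

lemma vd_zero_outside:
  fixes g :: "'a::real_normed_vector \<Rightarrow> 'b::real_normed_vector"
  assumes K: "closed K" and z: "\<And>x. x \<notin> K \<Longrightarrow> g x = 0" and p: "p \<notin> K"
    and d: "((\<lambda>h. g (p + h *\<^sub>R e)) has_vector_derivative D) (at 0)"
  shows "D = 0"
proof -
  have "open (- K)" using K by auto
  then obtain r where r: "r > 0" "ball p r \<subseteq> - K" using p by (auto simp: open_contains_ball)
  have ev: "\<forall>\<^sub>F h in at (0::real). (g (p + (0 + h) *\<^sub>R e) - g (p + 0 *\<^sub>R e)) /\<^sub>R h = 0"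
  proof -
    have "\<forall>\<^sub>F h in at (0::real). norm (h *\<^sub>R e) < r"
    proof -
      have "((\<lambda>h::real. h *\<^sub>R e) \<longlongrightarrow> 0 *\<^sub>R e) (at 0)" by (intro tendsto_intros)
      then have "((\<lambda>h::real. norm (h *\<^sub>R e)) \<longlongrightarrow> 0) (at 0)" using tendsto_norm_zero by fastforce
      then show ?thesis using r(1) by (rule order_tendstoD)
    qed
    then show ?thesis
    proof (rule eventually_mono)
      fix h :: real assume "norm (h *\<^sub>R e) < r"
      then have "p + h *\<^sub>R e \<in> ball p r" by (simp add: dist_norm)
      then have "g (p + h *\<^sub>R e) = 0" using r z by auto
      then show "(g (p + (0 + h) *\<^sub>R e) - g (p + 0 *\<^sub>R e)) /\<^sub>R h = 0" using z p by simp
    qed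
  qed
  from d have "((\<lambda>h. (g (p + (0 + h) *\<^sub>R e) - g (p + 0 *\<^sub>R e)) /\<^sub>R h) \<longlongrightarrow> D) (at 0)"
    unfolding vd_iff .
  then have "((\<lambda>h::real. 0) \<longlongrightarrow> D) (at 0)" using ev by (rule Lim_transform_eventually)
  then show ?thesis by (rule LIM_const_eq[symmetric])
qed

locale testfn =
  fixes f :: "'a::euclidean_space \<Rightarrow> real"
  assumes f: "smooth_compact_support f"
begin

definition K where "K = closure {p. f p \<noteq> 0}"

lemma K: "compact K" "closed K" using f unfolding smooth_compact_support_def K_def by auto

lemma diff: "set es \<subseteq> Basis \<Longrightarrow> iter_pd es f differentiable (at p)"
  using f unfolding smooth_compact_support_def smooth_def by auto

lemma cont: "set es \<subseteq> Basis \<Longrightarrow> isCont (iter_pd es f) p"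
  using diff by (rule differentiable_imp_continuous_within)

lemma zero: "set es \<subseteq> Basis \<Longrightarrow> p \<notin> K \<Longrightarrow> iter_pd es f p = 0"
proof (induction es arbitrary: p)
  case Nil
  then show ?case unfolding K_def using closure_subset[of "{p. f p \<noteq> 0}"] by auto
next
  case (Cons e es)
  then have es: "set es \<subseteq> Basis" by auto
  show ?case
    using vd_zero_outside[OF K(2) Cons.IH[OF es] Cons.prems(2) diff_dirderiv[OF diff[OF es]]]
    by simp
qed

lemma bounded: "set es \<subseteq> Basis \<Longrightarrow> \<exists>B. \<forall>p. \<bar>iter_pd es f p\<bar> \<le> B"
proof -
  assume es: "set es \<subseteq> Basis"
  have "continuous_on K (iter_pd es f)" using cont[OF es] by (simp add: continuous_at_imp_continuous_on)
  then have "compact (iter_pd es f ` K)" using K(1) by (rule compact_continuous_image)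
  then obtain B where B: "\<And>y. y \<in> iter_pd es f ` K \<Longrightarrow> norm y \<le> B"
    by (meson compact_imp_bounded bounded_iff)
  have "\<bar>iter_pd es f p\<bar> \<le> max B 0" for p
    using B[of "iter_pd es f p"] zero[OF es, of p] by (cases "p \<in> K") auto
  then show ?thesis by blast
qed

end


lemma int_cs:
  fixes g :: "'a::euclidean_space \<Rightarrow> 'b::{banach, second_countable_topology}"
  assumes "continuous_on UNIV g" "compact K" "\<And>x. x \<notin> K \<Longrightarrow> g x = 0"
  shows "integrable lborel g"
proof -
  have "integrable lborel (\<lambda>x. indicator K x *\<^sub>R g x)"
    by (rule borel_integrable_compact[OF assms(2) continuous_on_subset[OF assms(1) subset_UNIV]])
  moreover have "(\<lambda>x. indicator K x *\<^sub>R g x) = g"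
    using assms(3) by (auto simp: indicator_def)
  ultimately show ?thesis by simp
qed

lemma bnd_cs:
  fixes g :: "'a::euclidean_space \<Rightarrow> 'b::real_normed_vector"
  assumes "continuous_on UNIV g" "compact K" "\<And>x. x \<notin> K \<Longrightarrow> g x = 0"
  shows "\<exists>B. \<forall>x. norm (g x) \<le> B"
proof -
  have "compact (g ` K)" using assms by (meson compact_continuous_image continuous_on_subset subset_UNIV)
  then obtain B where B: "\<And>y. y \<in> g ` K \<Longrightarrow> norm y \<le> B"
    by (meson compact_imp_bounded bounded_iff)
  have "norm (g x) \<le> max B 0" for x
    using B[of "g x"] assms(3)[of x] by (cases "x \<in> K") auto
  then show ?thesis by blast
qed

lemma cis_vd:
  "((\<lambda>s. cis (a - s * b)) has_vector_derivative (- \<i> * complex_of_real b * cis (a - t * b))) (at t)"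
proof -
  have "((\<lambda>z. exp (\<i> * (of_real a - z * of_real b))) has_field_derivative
        (exp (\<i> * (of_real a - of_real t * of_real b)) * (- \<i> * of_real b))) (at (of_real t))"
    by (auto intro!: derivative_eq_intros)
  then have "((\<lambda>s. exp (\<i> * (of_real a - of_real s * of_real b))) has_vector_derivative
        (exp (\<i> * (of_real a - of_real t * of_real b)) * (- \<i> * of_real b))) (at t)"
    by (rule has_vector_derivative_real_field)
  then show ?thesis by (simp add: cis_conv_exp mult_ac)
qed

lemma FT_bound: "norm (FT g \<omega>) \<le> (\<integral>p. norm (g p) \<partial>lborel)"
proof -
  have "norm (FT g \<omega>) \<le> (\<integral>p. norm (cis (- (p \<bullet> \<omega>)) * g p) \<partial>lborel)"
    unfolding FT_def by (rule integral_norm_bound)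
  also have "\<dots> = (\<integral>p. norm (g p) \<partial>lborel)" by (simp add: norm_mult)
  finally show ?thesis .
qed

lemma sets_lborel_pair: "sets (lborel \<Otimes>\<^sub>M lborel) = sets (borel :: ('a::euclidean_space \<times> 'b::euclidean_space) measure)"
  by (metis borel_prod sets_lborel sets_pair_measure_cong)

lemma FT_measurable:
  fixes g :: "'d::finite pt \<Rightarrow> complex"
  assumes "continuous_on UNIV g"
  shows "FT g \<in> borel_measurable lborel"
proof -
  have c: "continuous_on UNIV (\<lambda>(\<omega>::'d pt, p::'d pt). cis (- (p \<bullet> \<omega>)) * g p)"
  proof -
    have "continuous_on UNIV (\<lambda>x::('d pt \<times> 'd pt). g (snd x))"
      by (rule continuous_on_compose2[OF assms continuous_on_snd]) auto
    then show ?thesis by (auto intro!: continuous_intros simp: split_beta)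
  qed
  have "(\<lambda>(\<omega>::'d pt, p::'d pt). cis (- (p \<bullet> \<omega>)) * g p) \<in> borel_measurable (lborel \<Otimes>\<^sub>M lborel)"
    unfolding measurable_cong_sets[OF sets_lborel_pair refl]
    by (rule borel_measurable_continuous_onI[OF c])
  then show ?thesis unfolding FT_def[abs_def]
    by (rule lborel.borel_measurable_lebesgue_integral)
qed

lemma FT_IBP:
  fixes g Dg :: "'d::finite pt \<Rightarrow> complex"
  assumes gc: "continuous_on UNIV g" and Dc: "continuous_on UNIV Dg"
    and K: "compact K" and zg: "\<And>x. x \<notin> K \<Longrightarrow> g x = 0" and zD: "\<And>x. x \<notin> K \<Longrightarrow> Dg x = 0"
    and der: "\<And>x. ((\<lambda>s. g (x + s *\<^sub>R e)) has_vector_derivative Dg x) (at 0)"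
  shows "FT Dg \<omega> = \<i> * of_real (e \<bullet> \<omega>) * FT g \<omega>"
proof -
  define h where "h x = cis (- (x \<bullet> \<omega>)) * g x" for x
  define Dh where "Dh x = cis (- (x \<bullet> \<omega>)) * Dg x - \<i> * of_real (e \<bullet> \<omega>) * (cis (- (x \<bullet> \<omega>)) * g x)" for x
  have cc: "continuous_on UNIV (\<lambda>x::'d pt. cis (- (x \<bullet> \<omega>)))"
    by (auto intro!: continuous_intros)
  have i1: "integrable lborel (\<lambda>x. cis (- (x \<bullet> \<omega>)) * g x)"
    by (rule int_cs[OF _ K]) (use zg in \<open>auto intro!: continuous_intros cc gc\<close>)
  have i2: "integrable lborel (\<lambda>x. cis (- (x \<bullet> \<omega>)) * Dg x)"
    by (rule int_cs[OF _ K]) (use zD in \<open>auto intro!: continuous_intros cc Dc\<close>)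
  obtain Bg where Bg: "\<And>x. norm (g x) \<le> Bg" using bnd_cs[OF gc K zg] by auto
  obtain BD where BD: "\<And>x. norm (Dg x) \<le> BD" using bnd_cs[OF Dc K zD] by auto
  obtain R where R: "K \<subseteq> cball 0 R" using compact_imp_bounded[OF K] by (meson bounded_subset_ballD ball_subset_cball order_trans)
  define H where "H x = indicator (cball 0 (R + norm e)) x *\<^sub>R (BD + \<bar>e \<bullet> \<omega>\<bar> * Bg)" for x :: "'d pt"
  have "0 = integral\<^sup>L lborel Dh"
  proof (rule IBP0[of h _ H e, symmetric])
    show "integrable lborel h" using i1 unfolding h_def .
    show "Dh \<in> borel_measurable lborel" unfolding Dh_def
      using i1 i2 by measurable
    show "integrable lborel H" unfolding H_def
      by (rule integrable_indicator) (use emeasure_bounded_finite[of "cball (0::'d pt) (R + norm e)"] in auto)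
    show "((\<lambda>s. h (x + s *\<^sub>R e)) has_vector_derivative Dh x) (at 0)" for x
    proof -
      have c: "((\<lambda>s. cis (- (x \<bullet> \<omega>) - s * (e \<bullet> \<omega>))) has_vector_derivative
          (- \<i> * complex_of_real (e \<bullet> \<omega>) * cis (- (x \<bullet> \<omega>) - 0 * (e \<bullet> \<omega>)))) (at 0)"
        by (rule cis_vd)
      have "((\<lambda>s. cis (- (x \<bullet> \<omega>) - s * (e \<bullet> \<omega>)) * g (x + s *\<^sub>R e)) has_vector_derivative
          (cis (- (x \<bullet> \<omega>) - 0 * (e \<bullet> \<omega>)) * Dg x + (- \<i> * complex_of_real (e \<bullet> \<omega>) * cis (- (x \<bullet> \<omega>) - 0 * (e \<bullet> \<omega>))) * g (x + 0 *\<^sub>R e))) (at 0)"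
        by (rule has_vector_derivative_mult[OF c der])
      then show ?thesis unfolding h_def Dh_def by (simp add: inner_add_left algebra_simps)
    qed
    show "norm (Dh (x + s *\<^sub>R e)) \<le> H x" if s: "\<bar>s\<bar> \<le> 1" for x s
    proof (cases "x + s *\<^sub>R e \<in> K")
      case True
      then have "norm (x + s *\<^sub>R e) \<le> R" using R by auto
      moreover have "norm (s *\<^sub>R e) \<le> norm e" using s by (simp add: mult_left_le_one_le)
      ultimately have "norm x \<le> R + norm e" using norm_triangle_ineq4[of "x + s *\<^sub>R e" "s *\<^sub>R e"] by simp
      moreover have "norm (Dh (x + s *\<^sub>R e)) \<le> BD + \<bar>e \<bullet> \<omega>\<bar> * Bg"
      proof -
        let ?y = "x + s *\<^sub>R e"
        have "norm (Dh ?y) \<le> norm (cis (- (?y \<bullet> \<omega>)) * Dg ?y) + norm (\<i> * of_real (e \<bullet> \<omega>) * (cis (- (?y \<bullet> \<omega>)) * g ?y))"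
          unfolding Dh_def by (rule norm_triangle_ineq4)
        also have "\<dots> = norm (Dg ?y) + \<bar>e \<bullet> \<omega>\<bar> * norm (g ?y)" by (simp add: norm_mult)
        also have "\<dots> \<le> BD + \<bar>e \<bullet> \<omega>\<bar> * Bg" by (intro add_mono mult_left_mono BD Bg) auto
        finally show ?thesis .
      qed
      ultimately show ?thesis unfolding H_def by simp
    next
      case False
      have "0 \<le> Bg" "0 \<le> BD" using order_trans[OF norm_ge_zero Bg] order_trans[OF norm_ge_zero BD] by auto
      then show ?thesis unfolding H_def Dh_def using zg zD False by (simp add: indicator_def)
    qed
  qed
  also have "integral\<^sup>L lborel Dh = FT Dg \<omega> - \<i> * of_real (e \<bullet> \<omega>) * FT g \<omega>"
    unfolding Dh_def FT_def using i1 i2 by simp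
  finally show ?thesis by simp
qed


lemma norm2_sum: "(norm (x::'a::euclidean_space))\<^sup>2 = (\<Sum>b\<in>Basis. (x \<bullet> b)\<^sup>2)"
  unfolding power2_norm_eq_inner by (subst euclidean_inner) (simp add: power2_eq_square)

lemma real_vd_of_real:
  fixes g :: "real \<Rightarrow> real"
  assumes "(g has_vector_derivative D) (at t)"
  shows "((\<lambda>h. complex_of_real (g h)) has_vector_derivative complex_of_real D) (at t)"
  using assms by (intro has_vector_derivative_of_real) (simp add: has_real_derivative_iff_has_vector_derivative)

locale testpt = testfn f for f :: "'d::finite pt \<Rightarrow> real"
begin

definition Fc where "Fc es p = complex_of_real (iter_pd es f p)"
definition Gv where "Gv E es p = complex_of_real ((p \<bullet> E) * iter_pd es f p)"

lemma Fc_cont: "set es \<subseteq> Basis \<Longrightarrow> continuous_on UNIV (Fc es)"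
  unfolding Fc_def using cont by (auto intro!: continuous_intros continuous_at_imp_continuous_on)

lemma Gv_cont: "set es \<subseteq> Basis \<Longrightarrow> continuous_on UNIV (Gv E es)"
proof -
  assume es: "set es \<subseteq> Basis"
  have "continuous_on UNIV (iter_pd es f)" using cont[OF es] by (simp add: continuous_at_imp_continuous_on)
  then show ?thesis unfolding Gv_def by (auto intro!: continuous_intros)
qed

lemma Fc_zero: "set es \<subseteq> Basis \<Longrightarrow> x \<notin> K \<Longrightarrow> Fc es x = 0"
  unfolding Fc_def using zero by simp

lemma Gv_zero: "set es \<subseteq> Basis \<Longrightarrow> x \<notin> K \<Longrightarrow> Gv E es x = 0"
  unfolding Gv_def using zero by simp

lemma vd_F: "set es \<subseteq> Basis \<Longrightarrow> ((\<lambda>h. iter_pd es f (p + h *\<^sub>R e)) has_vector_derivative iter_pd (e # es) f p) (at 0)"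
  using diff_dirderiv[OF diff] by simp

lemma FT_step_F:
  assumes "set (e # es) \<subseteq> Basis"
  shows "FT (Fc (e # es)) \<omega> = \<i> * of_real (e \<bullet> \<omega>) * FT (Fc es) \<omega>"
proof -
  have es: "set es \<subseteq> Basis" using assms by auto
  show ?thesis
  proof (rule FT_IBP[OF Fc_cont[OF es] Fc_cont[OF assms] K(1) Fc_zero[OF es] Fc_zero[OF assms]])
    show "((\<lambda>s. Fc es (x + s *\<^sub>R e)) has_vector_derivative Fc (e # es) x) (at 0)" for x
      unfolding Fc_def by (rule real_vd_of_real[OF vd_F[OF es]])
  qed
qed

lemma FT_step_G:
  assumes "set (e # es) \<subseteq> Basis"
  shows "of_real (e \<bullet> E) * FT (Fc es) \<omega> + FT (Gv E (e # es)) \<omega> = \<i> * of_real (e \<bullet> \<omega>) * FT (Gv E es) \<omega>"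
proof -
  have es: "set es \<subseteq> Basis" using assms by auto
  define Dg where "Dg p = of_real (e \<bullet> E) * Fc es p + Gv E (e # es) p" for p
  have Dc: "continuous_on UNIV Dg" unfolding Dg_def
    by (intro continuous_intros Fc_cont[OF es] Gv_cont[OF assms])
  have "FT Dg \<omega> = \<i> * of_real (e \<bullet> \<omega>) * FT (Gv E es) \<omega>"
  proof (rule FT_IBP[OF Gv_cont[OF es] Dc K(1) Gv_zero[OF es]])
    show "Dg x = 0" if "x \<notin> K" for x unfolding Dg_def using Fc_zero[OF es that] Gv_zero[OF assms that] by simp
    show "((\<lambda>s. Gv E es (x + s *\<^sub>R e)) has_vector_derivative Dg x) (at 0)" for x
    proof -
      have l: "((\<lambda>h. (x + h *\<^sub>R e) \<bullet> E) has_vector_derivative (e \<bullet> E)) (at 0)"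
        unfolding has_vector_derivative_def
        by (auto intro!: derivative_eq_intros simp: inner_add_left)
      have "((\<lambda>h. ((x + h *\<^sub>R e) \<bullet> E) * iter_pd es f (x + h *\<^sub>R e)) has_vector_derivative
          ((x + 0 *\<^sub>R e) \<bullet> E) * iter_pd (e # es) f x + (e \<bullet> E) * iter_pd es f (x + 0 *\<^sub>R e)) (at 0)"
        by (rule has_vector_derivative_mult[OF l vd_F[OF es]])
      then have "((\<lambda>h. complex_of_real (((x + h *\<^sub>R e) \<bullet> E) * iter_pd es f (x + h *\<^sub>R e))) has_vector_derivative
          complex_of_real (((x + 0 *\<^sub>R e) \<bullet> E) * iter_pd (e # es) f x + (e \<bullet> E) * iter_pd es f (x + 0 *\<^sub>R e))) (at 0)"
        by (rule real_vd_of_real)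
      moreover have "complex_of_real (((x + 0 *\<^sub>R e) \<bullet> E) * iter_pd (e # es) f x + (e \<bullet> E) * iter_pd es f (x + 0 *\<^sub>R e)) = Dg x"
        unfolding Dg_def Fc_def Gv_def by simp
      ultimately show ?thesis unfolding Gv_def by simp
    qed
  qed
  moreover have "FT Dg \<omega> = of_real (e \<bullet> E) * FT (Fc es) \<omega> + FT (Gv E (e # es)) \<omega>"
  proof -
    have i1: "integrable lborel (\<lambda>x. cis (- (x \<bullet> \<omega>)) * Fc es x)"
      by (rule int_cs[OF _ K(1)]) (use Fc_zero[OF es] in \<open>auto intro!: continuous_intros Fc_cont[OF es]\<close>)
    have i2: "integrable lborel (\<lambda>x. cis (- (x \<bullet> \<omega>)) * Gv E (e # es) x)"
      by (rule int_cs[OF _ K(1)]) (use Gv_zero[OF assms] in \<open>auto intro!: continuous_intros Gv_cont[OF assms]\<close>)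
    show ?thesis unfolding FT_def Dg_def using i1 i2 by (simp add: algebra_simps)
  qed
  ultimately show ?thesis by simp
qed

end


lemma step_sum:
  fixes n :: "'a::euclidean_space \<Rightarrow> real"
  assumes "\<And>\<omega>. (1 + (norm \<omega>)\<^sup>2)^N * n \<omega> \<le> C0"
    and "\<And>b \<omega>. b \<in> Basis \<Longrightarrow> (1 + (norm \<omega>)\<^sup>2)^N * ((\<omega> \<bullet> b)\<^sup>2 * n \<omega>) \<le> c b"
  shows "(1 + (norm \<omega>)\<^sup>2)^Suc N * n \<omega> \<le> C0 + (\<Sum>b\<in>Basis. c b)"
proof -
  have "(1 + (norm \<omega>)\<^sup>2)^Suc N * n \<omega> = (1 + (norm \<omega>)\<^sup>2)^N * n \<omega> + (norm \<omega>)\<^sup>2 * ((1 + (norm \<omega>)\<^sup>2)^N * n \<omega>)"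
    by (simp add: algebra_simps)
  also have "(norm \<omega>)\<^sup>2 * ((1 + (norm \<omega>)\<^sup>2)^N * n \<omega>) = (\<Sum>b\<in>Basis. (1 + (norm \<omega>)\<^sup>2)^N * ((\<omega> \<bullet> b)\<^sup>2 * n \<omega>))"
    unfolding norm2_sum[of \<omega>] sum_distrib_right by (simp add: mult_ac)
  also have "(1 + (norm \<omega>)\<^sup>2)^N * n \<omega> + \<dots> \<le> C0 + (\<Sum>b\<in>Basis. c b)"
    by (intro add_mono assms sum_mono) auto
  finally show ?thesis .
qed

context testpt
begin

lemma nFF: "set (b # es) \<subseteq> Basis \<Longrightarrow> norm (FT (Fc (b # b # es)) \<omega>) = (\<omega> \<bullet> b)\<^sup>2 * norm (FT (Fc es) \<omega>)"
proof -
  assume a: "set (b # es) \<subseteq> Basis"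
  then have a2: "set (b # b # es) \<subseteq> Basis" by auto
  show ?thesis
    unfolding FT_step_F[OF a2] FT_step_F[OF a] by (simp add: norm_mult inner_commute power2_eq_square)
qed

lemma decF: "\<forall>es. set es \<subseteq> Basis \<longrightarrow> (\<exists>C. \<forall>\<omega>. (1 + (norm \<omega>)\<^sup>2)^N * norm (FT (Fc es) \<omega>) \<le> C)"
proof (induction N)
  case 0
  show ?case
  proof (intro allI impI)
    fix es :: "'d pt list"
    show "\<exists>C. \<forall>\<omega>. (1 + (norm \<omega>)\<^sup>2)^0 * norm (FT (Fc es) \<omega>) \<le> C"
      using FT_bound[of "Fc es"] by (intro exI[of _ "LBINT p. norm (Fc es p)"] allI) simp
  qed
next
  case (Suc N)
  show ?case
  proof (intro allI impI)
    fix es :: "'d pt list" assume es: "set es \<subseteq> Basis"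
    obtain C0 where C0: "\<And>\<omega>. (1 + (norm \<omega>)\<^sup>2)^N * norm (FT (Fc es) \<omega>) \<le> C0" using Suc es by blast
    have "\<forall>b\<in>Basis. \<exists>C. \<forall>\<omega>. (1 + (norm \<omega>)\<^sup>2)^N * norm (FT (Fc (b # b # es)) \<omega>) \<le> C"
      using Suc es by auto
    then obtain c where c: "\<And>b \<omega>. b \<in> Basis \<Longrightarrow> (1 + (norm \<omega>)\<^sup>2)^N * norm (FT (Fc (b # b # es)) \<omega>) \<le> c b"
      by metis
    have "(1 + (norm \<omega>)\<^sup>2)^Suc N * norm (FT (Fc es) \<omega>) \<le> C0 + (\<Sum>b\<in>Basis. c b)" for \<omega>
    proof (rule step_sum[where n="\<lambda>\<omega>. norm (FT (Fc es) \<omega>)", OF C0])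
      fix b \<omega> assume b: "(b::'d pt) \<in> Basis"
      then show "(1 + (norm \<omega>)\<^sup>2)^N * ((\<omega> \<bullet> b)\<^sup>2 * norm (FT (Fc es) \<omega>)) \<le> c b"
        using c[OF b, of \<omega>] nFF[of b es \<omega>] es by simp
    qed
    then show "\<exists>C. \<forall>\<omega>. (1 + (norm \<omega>)\<^sup>2)^Suc N * norm (FT (Fc es) \<omega>) \<le> C" by blast
  qed
qed

lemma nGG: "set (b # es) \<subseteq> Basis \<Longrightarrow>
   (\<omega> \<bullet> b)\<^sup>2 * norm (FT (Gv E es) \<omega>) \<le> 2 * \<bar>b \<bullet> E\<bar> * norm (FT (Fc (b # es)) \<omega>) + norm (FT (Gv E (b # b # es)) \<omega>)"
proof -
  assume a: "set (b # es) \<subseteq> Basis"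
  then have a2: "set (b # b # es) \<subseteq> Basis" by auto
  have e1: "of_real (b \<bullet> E) * FT (Fc es) \<omega> + FT (Gv E (b # es)) \<omega> = \<i> * of_real (b \<bullet> \<omega>) * FT (Gv E es) \<omega>"
    by (rule FT_step_G[OF a])
  have e2: "of_real (b \<bullet> E) * FT (Fc (b # es)) \<omega> + FT (Gv E (b # b # es)) \<omega> = \<i> * of_real (b \<bullet> \<omega>) * FT (Gv E (b # es)) \<omega>"
    by (rule FT_step_G[OF a2])
  have e3: "FT (Fc (b # es)) \<omega> = \<i> * of_real (b \<bullet> \<omega>) * FT (Fc es) \<omega>" by (rule FT_step_F[OF a])
  have "- (of_real ((b \<bullet> \<omega>)\<^sup>2) * FT (Gv E es) \<omega>) = \<i> * of_real (b \<bullet> \<omega>) * (\<i> * of_real (b \<bullet> \<omega>) * FT (Gv E es) \<omega>)"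
    by (simp add: power2_eq_square algebra_simps)
  also have "\<dots> = 2 * (of_real (b \<bullet> E) * FT (Fc (b # es)) \<omega>) + FT (Gv E (b # b # es)) \<omega>"
    unfolding e1[symmetric] e3 using e2[unfolded e3] by (simp add: algebra_simps)
  finally have "norm (of_real ((b \<bullet> \<omega>)\<^sup>2) * FT (Gv E es) \<omega>) = norm (2 * (of_real (b \<bullet> E) * FT (Fc (b # es)) \<omega>) + FT (Gv E (b # b # es)) \<omega>)"
    by (metis norm_minus_cancel)
  also have "\<dots> \<le> 2 * \<bar>b \<bullet> E\<bar> * norm (FT (Fc (b # es)) \<omega>) + norm (FT (Gv E (b # b # es)) \<omega>)"
    by (rule order_trans[OF norm_triangle_ineq]) (simp add: norm_mult)
  finally show ?thesis by (simp add: norm_mult inner_commute norm_power)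
qed

lemma decG: "\<forall>es. set es \<subseteq> Basis \<longrightarrow> (\<exists>C. \<forall>\<omega>. (1 + (norm \<omega>)\<^sup>2)^N * norm (FT (Gv E es) \<omega>) \<le> C)"
proof (induction N)
  case 0
  show ?case
  proof (intro allI impI)
    fix es :: "'d pt list"
    show "\<exists>C. \<forall>\<omega>. (1 + (norm \<omega>)\<^sup>2)^0 * norm (FT (Gv E es) \<omega>) \<le> C"
      using FT_bound[of "Gv E es"] by (intro exI[of _ "LBINT p. norm (Gv E es p)"] allI) simp
  qed
next
  case (Suc N)
  show ?case
  proof (intro allI impI)
    fix es :: "'d pt list" assume es: "set es \<subseteq> Basis"
    obtain C0 where C0: "\<And>\<omega>. (1 + (norm \<omega>)\<^sup>2)^N * norm (FT (Gv E es) \<omega>) \<le> C0" using Suc es by blast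
    have "\<forall>b\<in>Basis. \<exists>C. \<forall>\<omega>. (1 + (norm \<omega>)\<^sup>2)^N * norm (FT (Gv E (b # b # es)) \<omega>) \<le> C"
      using Suc es by auto
    then obtain c where c: "\<And>b \<omega>. b \<in> Basis \<Longrightarrow> (1 + (norm \<omega>)\<^sup>2)^N * norm (FT (Gv E (b # b # es)) \<omega>) \<le> c b"
      by metis
    have "\<forall>b\<in>Basis. \<exists>C. \<forall>\<omega>. (1 + (norm \<omega>)\<^sup>2)^N * norm (FT (Fc (b # es)) \<omega>) \<le> C"
      using decF es by auto
    then obtain d where d: "\<And>b \<omega>. b \<in> Basis \<Longrightarrow> (1 + (norm \<omega>)\<^sup>2)^N * norm (FT (Fc (b # es)) \<omega>) \<le> d b"
      by metis
    have "(1 + (norm \<omega>)\<^sup>2)^Suc N * norm (FT (Gv E es) \<omega>) \<le> C0 + (\<Sum>b\<in>Basis. 2 * \<bar>b \<bullet> E\<bar> * d b + c b)" for \<omega>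
    proof (rule step_sum[where n="\<lambda>\<omega>. norm (FT (Gv E es) \<omega>)", OF C0])
      fix b \<omega> assume b: "(b::'d pt) \<in> Basis"
      have "(1 + (norm \<omega>)\<^sup>2)^N * ((\<omega> \<bullet> b)\<^sup>2 * norm (FT (Gv E es) \<omega>))
          \<le> (1 + (norm \<omega>)\<^sup>2)^N * (2 * \<bar>b \<bullet> E\<bar> * norm (FT (Fc (b # es)) \<omega>) + norm (FT (Gv E (b # b # es)) \<omega>))"
        using nGG[of b es \<omega> E] es b by (intro mult_left_mono) auto
      also have "\<dots> = 2 * \<bar>b \<bullet> E\<bar> * ((1 + (norm \<omega>)\<^sup>2)^N * norm (FT (Fc (b # es)) \<omega>)) + (1 + (norm \<omega>)\<^sup>2)^N * norm (FT (Gv E (b # b # es)) \<omega>)"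
        by (simp add: algebra_simps)
      also have "\<dots> \<le> 2 * \<bar>b \<bullet> E\<bar> * d b + c b"
        by (intro add_mono mult_left_mono d c b) auto
      finally show "(1 + (norm \<omega>)\<^sup>2)^N * ((\<omega> \<bullet> b)\<^sup>2 * norm (FT (Gv E es) \<omega>)) \<le> 2 * \<bar>b \<bullet> E\<bar> * d b + c b" .
    qed
    then show "\<exists>C. \<forall>\<omega>. (1 + (norm \<omega>)\<^sup>2)^Suc N * norm (FT (Gv E es) \<omega>) \<le> C" by blast
  qed
qed

end


lemma cis_minus_1: "cmod (cis t - 1) \<le> \<bar>t\<bar>"
proof -
  have "cmod (cis t - 1) = 2 * \<bar>sin (t / 2)\<bar>" by (simp add: cis_conv_exp dist_exp_i_1)
  also have "\<dots> \<le> 2 * \<bar>t / 2\<bar>" using abs_sin_x_le_abs_x[of "t/2"] by simp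
  finally show ?thesis by simp
qed

context testpt
begin

lemma FT_deriv_eta:
  "((\<lambda>h. FT (Fc []) (\<omega> + h *\<^sub>R E)) has_vector_derivative (- \<i> * FT (Gv E []) \<omega>)) (at 0)"
proof -
  define s where "s h p = cis (- (p \<bullet> \<omega>)) * Fc [] p * ((cis (- (h * (p \<bullet> E))) - 1) / of_real h)" for h p
  define L where "L p = cis (- (p \<bullet> \<omega>)) * Fc [] p * (- \<i> * of_real (p \<bullet> E))" for p
  have e0: "set ([]::'d pt list) \<subseteq> Basis" by simp
  have iF: "integrable lborel (\<lambda>p. cis (- (p \<bullet> \<omega>')) * Fc [] p)" for \<omega>'
    by (rule int_cs[OF _ K(1)]) (use Fc_zero[OF e0] in \<open>auto intro!: continuous_intros Fc_cont[OF e0]\<close>)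
  have iG: "integrable lborel (\<lambda>p. norm (Gv E [] p))"
    by (rule int_cs[OF _ K(1)]) (use Gv_zero[OF e0] in \<open>auto intro!: continuous_intros Gv_cont[OF e0]\<close>)
  have cm: "\<And>a b. cis (a - b) = cis a * cis (- b)" by (simp add: cis_mult)
  have eq: "(FT (Fc []) (\<omega> + h *\<^sub>R E) - FT (Fc []) \<omega>) /\<^sub>R h = integral\<^sup>L lborel (s h)" for h
  proof -
    have "FT (Fc []) (\<omega> + h *\<^sub>R E) = (\<integral>p. cis (- (p \<bullet> \<omega>)) * Fc [] p * cis (- (h * (p \<bullet> E))) \<partial>lborel)"
      unfolding FT_def by (intro Bochner_Integration.integral_cong) (auto simp: inner_add_right cm algebra_simps)
    then have "FT (Fc []) (\<omega> + h *\<^sub>R E) - FT (Fc []) \<omega> = (\<integral>p. cis (- (p \<bullet> \<omega>)) * Fc [] p * (cis (- (h * (p \<bullet> E))) - 1) \<partial>lborel)"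
    proof -
      have "integrable lborel (\<lambda>p. cis (- (p \<bullet> \<omega>)) * Fc [] p * cis (- (h * (p \<bullet> E))))"
        using iF[of "\<omega> + h *\<^sub>R E"] by (simp add: inner_add_right cm algebra_simps)
      moreover assume "FT (Fc []) (\<omega> + h *\<^sub>R E) = (\<integral>p. cis (- (p \<bullet> \<omega>)) * Fc [] p * cis (- (h * (p \<bullet> E))) \<partial>lborel)"
      ultimately show ?thesis unfolding FT_def using iF[of \<omega>] by (simp add: algebra_simps)
    qed
    then show ?thesis unfolding s_def
      by (simp add: scaleR_conv_of_real divide_inverse mult_ac flip: integral_mult_right_zero)
  qed
  have "((\<lambda>h. integral\<^sup>L lborel (s h)) \<longlongrightarrow> integral\<^sup>L lborel L) (at 0)"
  proof (rule DC0[where w="\<lambda>p. norm (Gv E [] p)"])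
    have cF: "continuous_on UNIV (Fc [])" by (rule Fc_cont) simp
    show "s h \<in> borel_measurable lborel" for h unfolding s_def divide_inverse measurable_lborel2
      by (intro borel_measurable_continuous_onI continuous_intros cF)
    show "L \<in> borel_measurable lborel" unfolding L_def measurable_lborel2
      by (intro borel_measurable_continuous_onI continuous_intros cF)
    show "integrable lborel (\<lambda>p. norm (Gv E [] p))" by (rule iG)
    show "((\<lambda>h. s h p) \<longlongrightarrow> L p) (at 0)" for p
    proof -
      have "((\<lambda>h. cis (0 - h * (p \<bullet> E))) has_vector_derivative (- \<i> * complex_of_real (p \<bullet> E) * cis (0 - 0 * (p \<bullet> E)))) (at 0)"
        by (rule cis_vd)
      then have "((\<lambda>h. (cis (0 - (0 + h) * (p \<bullet> E)) - cis (0 - 0 * (p \<bullet> E))) /\<^sub>R h) \<longlongrightarrow> - \<i> * complex_of_real (p \<bullet> E)) (at 0)"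
        unfolding vd_iff by simp
      then have "((\<lambda>h. (cis (- (h * (p \<bullet> E))) - 1) / of_real h) \<longlongrightarrow> - \<i> * complex_of_real (p \<bullet> E)) (at 0)"
        by (simp add: scaleR_conv_of_real divide_inverse mult_ac)
      then show ?thesis unfolding s_def L_def by (intro tendsto_intros)
    qed
    show "norm (s h p) \<le> norm (Gv E [] p)" if "h \<noteq> 0" for h p
    proof -
      have "norm (s h p) = norm (Fc [] p) * (cmod (cis (- (h * (p \<bullet> E))) - 1) / \<bar>h\<bar>)"
        unfolding s_def by (simp add: norm_mult norm_divide)
      also have "\<dots> \<le> norm (Fc [] p) * \<bar>p \<bullet> E\<bar>"
      proof (rule mult_left_mono)
        show "cmod (cis (- (h * (p \<bullet> E))) - 1) / \<bar>h\<bar> \<le> \<bar>p \<bullet> E\<bar>"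
          using cis_minus_1[of "- (h * (p \<bullet> E))"] that by (simp add: divide_le_eq abs_mult mult.commute)
      qed simp
      also have "\<dots> = norm (Gv E [] p)" unfolding Fc_def Gv_def by (simp add: abs_mult norm_mult)
      finally show ?thesis .
    qed
  qed
  moreover have "integral\<^sup>L lborel L = - \<i> * FT (Gv E []) \<omega>"
    unfolding L_def FT_def Fc_def Gv_def by (simp add: mult_ac flip: integral_mult_right_zero)
  ultimately have "((\<lambda>h. integral\<^sup>L lborel (s h)) \<longlongrightarrow> - \<i> * FT (Gv E []) \<omega>) (at 0)"
    by simp
  then show ?thesis unfolding vd_iff by (simp add: eq)
qed

end


definition decr :: "('a::euclidean_space \<Rightarrow> real) \<Rightarrow> bool" where
  "decr n \<longleftrightarrow> (\<forall>N. \<exists>C. \<forall>\<omega>. (1 + (norm \<omega>)\<^sup>2)^N * n \<omega> \<le> C)"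

lemma decrD: "decr n \<Longrightarrow> \<exists>C. \<forall>\<omega>. (1 + (norm \<omega>)\<^sup>2)^N * n \<omega> \<le> C"
  unfolding decr_def by blast

lemma decr_mult:
  assumes "decr n1" "decr n2" "\<And>\<omega>. n1 \<omega> \<ge> 0" "\<And>\<omega>. n2 \<omega> \<ge> 0"
  shows "decr (\<lambda>\<omega>. n1 \<omega> * n2 \<omega>)"
  unfolding decr_def
proof
  fix N
  obtain C1 where C1: "\<And>\<omega>. (1 + (norm \<omega>)\<^sup>2)^N * n1 \<omega> \<le> C1" using decrD[OF assms(1)] by blast
  obtain C2 where C2: "\<And>\<omega>. (1 + (norm \<omega>)\<^sup>2)^0 * n2 \<omega> \<le> C2" using decrD[OF assms(2)] by blast
  have "(1 + (norm \<omega>)\<^sup>2)^N * (n1 \<omega> * n2 \<omega>) \<le> C1 * C2" for \<omega>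
  proof -
    have "(1 + (norm \<omega>)\<^sup>2)^N * (n1 \<omega> * n2 \<omega>) = ((1 + (norm \<omega>)\<^sup>2)^N * n1 \<omega>) * n2 \<omega>" by simp
    also have "\<dots> \<le> C1 * C2"
    proof (rule mult_mono)
      have "0 \<le> (1 + (norm \<omega>)\<^sup>2)^N * n1 \<omega>" using assms(3)[of \<omega>] by simp
      then show "0 \<le> C1" using C1[of \<omega>] by linarith
    qed (use C1[of \<omega>] C2[of \<omega>] assms(4)[of \<omega>] in auto)
    finally show ?thesis .
  qed
  then show "\<exists>C. \<forall>\<omega>. (1 + (norm \<omega>)\<^sup>2)^N * (n1 \<omega> * n2 \<omega>) \<le> C" by blast
qed

lemma decr_sum:
  assumes "finite I" "\<And>i. i \<in> I \<Longrightarrow> decr (n i)"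
  shows "decr (\<lambda>\<omega>. \<Sum>i\<in>I. n i \<omega>)"
  using assms
proof (induction I rule: finite_induct)
  case empty
  then show ?case unfolding decr_def by auto
next
  case (insert i I)
  show ?case unfolding decr_def
  proof
    fix N
    obtain C1 where C1: "\<And>\<omega>. (1 + (norm \<omega>)\<^sup>2)^N * n i \<omega> \<le> C1" using decrD insert by blast
    obtain C2 where C2: "\<And>\<omega>. (1 + (norm \<omega>)\<^sup>2)^N * (\<Sum>i\<in>I. n i \<omega>) \<le> C2" using decrD insert by blast
    have "(1 + (norm \<omega>)\<^sup>2)^N * (\<Sum>i\<in>insert i I. n i \<omega>) \<le> C1 + C2" for \<omega>
      using C1[of \<omega>] C2[of \<omega>] insert.hyps by (simp add: distrib_left)
    then show "\<exists>C. \<forall>\<omega>. (1 + (norm \<omega>)\<^sup>2)^N * (\<Sum>i\<in>insert i I. n i \<omega>) \<le> C" by blast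
  qed
qed

lemma decr_cmult: "decr n \<Longrightarrow> c \<ge> 0 \<Longrightarrow> decr (\<lambda>\<omega>. c * n \<omega>)"
  unfolding decr_def
proof
  fix N assume "\<forall>N. \<exists>C. \<forall>\<omega>. (1 + (norm \<omega>)\<^sup>2)^N * n \<omega> \<le> C" "c \<ge> 0"
  then obtain C where C: "\<And>\<omega>. (1 + (norm \<omega>)\<^sup>2)^N * n \<omega> \<le> C" by blast
  have "(1 + (norm \<omega>)\<^sup>2)^N * (c * n \<omega>) \<le> c * C" for \<omega>
    using mult_left_mono[OF C[of \<omega>] \<open>c \<ge> 0\<close>] by (simp add: mult_ac)
  then show "\<exists>C. \<forall>\<omega>. (1 + (norm \<omega>)\<^sup>2)^N * (c * n \<omega>) \<le> C" by blast
qed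

lemma decr_bound:
  assumes "decr n"
  shows "\<exists>C. \<forall>\<omega>::'a::euclidean_space. (1 + (norm \<omega>)\<^sup>2)^K * n \<omega> \<le> C * inverse ((1 + (norm \<omega>)\<^sup>2)^M)"
proof -
  obtain C where C: "\<And>\<omega>. (1 + (norm \<omega>)\<^sup>2)^(K + M) * n \<omega> \<le> C" using decrD[OF assms] by blast
  have "(1 + (norm \<omega>)\<^sup>2)^K * n \<omega> \<le> C * inverse ((1 + (norm \<omega>)\<^sup>2)^M)" for \<omega> :: 'a
  proof -
    have p: "(1 + (norm \<omega>)\<^sup>2)^M > 0" by (simp add: add_pos_nonneg)
    have "(1 + (norm \<omega>)\<^sup>2)^K * n \<omega> * (1 + (norm \<omega>)\<^sup>2)^M \<le> C"
      using C[of \<omega>] by (simp add: power_add mult_ac)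
    then show ?thesis using p by (simp add: field_simps)
  qed
  then show ?thesis by blast
qed

lemma integrable_by_bound:
  fixes g :: "'a::euclidean_space \<Rightarrow> 'b::{banach, second_countable_topology}"
  assumes "g \<in> borel_measurable lborel"
    and "\<And>\<omega>. norm (g \<omega>) \<le> C * inverse ((1 + (norm \<omega>)\<^sup>2)^(DIM('a) + 2))"
  shows "integrable lborel g"
proof (rule Bochner_Integration.integrable_bound[where f="\<lambda>\<omega>. C * inverse ((1 + (norm \<omega>)\<^sup>2)^(DIM('a) + 2))"])
  show "integrable lborel (\<lambda>\<omega>::'a. C * inverse ((1 + (norm \<omega>)\<^sup>2)^(DIM('a) + 2)))"
    by (intro integrable_mult_right integrable_decay_basic) simp
  show "AE x in lborel. norm (g x) \<le> norm (C * inverse ((1 + (norm x)\<^sup>2)^(DIM('a) + 2)))"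
  proof (intro AE_I2)
    fix x :: 'a
    have "C * inverse ((1 + (norm x)\<^sup>2)^(DIM('a) + 2)) \<le> norm (C * inverse ((1 + (norm x)\<^sup>2)^(DIM('a) + 2)))"
      by (simp only: real_norm_def abs_ge_self)
    then show "norm (g x) \<le> norm (C * inverse ((1 + (norm x)\<^sup>2)^(DIM('a) + 2)))"
      using assms(2)[of x] by linarith
  qed
qed (rule assms(1))

lemma integrable_decr:
  fixes g :: "'a::euclidean_space \<Rightarrow> 'b::{banach, second_countable_topology}"
  assumes "g \<in> borel_measurable lborel" "decr n"
    and "\<And>\<omega>. norm (g \<omega>) \<le> A * ((1 + (norm \<omega>)\<^sup>2)^K * n \<omega>)" "A \<ge> 0"
  shows "integrable lborel g"
proof -
  obtain C where C: "\<And>\<omega>::'a. (1 + (norm \<omega>)\<^sup>2)^K * n \<omega> \<le> C * inverse ((1 + (norm \<omega>)\<^sup>2)^(DIM('a) + 2))"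
    using decr_bound[OF assms(2)] by blast
  show ?thesis
  proof (rule integrable_by_bound[OF assms(1)])
    fix \<omega>
    show "norm (g \<omega>) \<le> (A * C) * inverse ((1 + (norm \<omega>)\<^sup>2)^(DIM('a) + 2))"
      using order_trans[OF assms(3) mult_left_mono[OF C assms(4)]] by (simp add: mult_ac)
  qed
qed

lemma jbr_ge1: "jbr x \<ge> 1"
  unfolding jbr_def by simp

lemma jbr_pos: "jbr x > 0"
  using jbr_ge1[of x] by simp

lemma jbr_sq: "(jbr x)\<^sup>2 = 1 + (norm x)\<^sup>2"
  unfolding jbr_def by (simp add: add_nonneg_nonneg)

lemma jbr_powr_bound:
  assumes "norm x \<le> norm \<omega>" "\<bar>a\<bar> \<le> 2 * real K"
  shows "jbr x powr a \<le> (1 + (norm \<omega>)\<^sup>2)^K"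
proof -
  have "jbr x powr a \<le> jbr x powr (2 * real K)"
    using assms(2) jbr_ge1[of x] by (intro powr_mono) auto
  also have "\<dots> = (jbr x ^ 2) ^ K"
  proof -
    have "jbr x powr (2 * real K) = jbr x powr (real (2 * K))" by simp
    also have "\<dots> = jbr x ^ (2 * K)" using jbr_pos[of x] by (rule powr_realpow)
    also have "\<dots> = (jbr x ^ 2) ^ K" by (rule power_mult)
    finally show ?thesis .
  qed
  also have "\<dots> = (1 + (norm x)\<^sup>2) ^ K" by (simp add: jbr_sq)
  also have "\<dots> \<le> (1 + (norm \<omega>)\<^sup>2)^K"
    using assms(1) by (intro power_mono add_left_mono) (auto intro: power_mono)
  finally show ?thesis .
qed

lemma le_1X: "norm x \<le> norm \<omega> \<Longrightarrow> norm x \<le> 1 + (norm \<omega>)\<^sup>2"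
proof -
  assume "norm x \<le> norm \<omega>"
  moreover have "norm \<omega> \<le> 1 + (norm \<omega>)\<^sup>2"
  proof -
    have "0 \<le> (norm \<omega> - 1)\<^sup>2" by simp
    then have h: "norm \<omega> * 2 \<le> 1 + norm \<omega> * norm \<omega>" by (simp add: power2_eq_square algebra_simps)
    show ?thesis unfolding power2_eq_square using h norm_ge_zero[of \<omega>] by linarith
  qed
  ultimately show ?thesis by linarith
qed


definition Ej :: "'d::finite \<Rightarrow> 'd pt" where "Ej j = (0, 0, axis j 1)"

lemma inner_Ej: "p \<bullet> Ej j = snd (snd p) $ j"
  by (cases p) (auto simp: Ej_def inner_axis)

lemma Ej_Basis: "Ej j \<in> Basis"
  unfolding Ej_def by (auto simp: Basis_prod_def cart_basis_def)

lemma norm_Ej: "norm (Ej j) = 1"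
  unfolding Ej_def by (simp add: norm_Pair)

lemma (in testpt) fhat_eq: "fhat f = FT (Fc [])"
  unfolding fhat_def Fc_def by simp

lemma (in testpt) vfhat_eq: "vfhat f j = FT (Gv (Ej j) [])"
  unfolding vfhat_def Gv_def by (simp add: inner_Ej)

lemma (in testpt) deta_fhat: "deta (fhat f) j \<omega> = - \<i> * vfhat f j \<omega>"
  unfolding deta_def dirderiv_def fhat_eq vfhat_eq Ej_def[symmetric]
  by (rule vector_derivative_at[OF FT_deriv_eta])

lemma (in testpt) decr_fhat: "decr (\<lambda>\<omega>. cmod (fhat f \<omega>))"
  unfolding decr_def fhat_eq
proof
  fix N show "\<exists>C. \<forall>\<omega>. (1 + (norm \<omega>)\<^sup>2) ^ N * cmod (FT (Fc []) \<omega>) \<le> C"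
    using decF[of N] by simp
qed

lemma (in testpt) decr_vfhat: "decr (\<lambda>\<omega>. cmod (vfhat f j \<omega>))"
  unfolding decr_def vfhat_eq
proof
  fix N show "\<exists>C. \<forall>\<omega>. (1 + (norm \<omega>)\<^sup>2) ^ N * cmod (FT (Gv (Ej j) []) \<omega>) \<le> C"
    using decG[where N=N and E="Ej j"] by simp
qed

lemma (in testpt) meas_fhat[measurable]: "fhat f \<in> borel_measurable borel"
  using FT_measurable[OF Fc_cont[of "[]"]] unfolding fhat_eq by simp

lemma (in testpt) meas_vfhat[measurable]: "vfhat f j \<in> borel_measurable borel"
  using FT_measurable[OF Gv_cont[of "[]"]] unfolding vfhat_eq by simp

locale chifn =
  fixes chi :: "'d::finite pt \<Rightarrow> real"
  assumes chi: "smooth_bounded chi"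
begin

lemma chi_diff: "chi differentiable (at p)"
  using chi unfolding smooth_bounded_def smooth_def by (metis empty_subsetI iter_pd.simps(1) list.set(1))

lemma chi_cont: "continuous_on UNIV chi"
  using chi_diff by (simp add: continuous_at_imp_continuous_on differentiable_imp_continuous_within)

lemma chi_meas[measurable]: "chi \<in> borel_measurable borel"
  by (rule borel_measurable_continuous_onI[OF chi_cont])

lemma chi_bnd: "\<exists>B. \<forall>p. \<bar>chi p\<bar> \<le> B"
proof -
  have "\<forall>es. set es \<subseteq> Basis \<longrightarrow> bounded (range (iter_pd es chi))" using chi unfolding smooth_bounded_def by auto
  then have "set ([]::'d pt list) \<subseteq> Basis \<longrightarrow> bounded (range (iter_pd [] chi))" by (rule spec)
  then have "bounded (range (iter_pd [] chi))" by simp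
  then show ?thesis by (auto simp: bounded_iff)
qed

lemma deta_eq: "deta chi j = iter_pd [Ej j] chi"
  unfolding deta_def Ej_def by (simp add: fun_eq_iff)

lemma deta_diff: "deta chi j differentiable (at p)"
proof -
  have "\<forall>es. set es \<subseteq> Basis \<longrightarrow> (\<forall>p. iter_pd es chi differentiable (at p))" using chi unfolding smooth_bounded_def smooth_def by auto
  then have "set [Ej j] \<subseteq> Basis \<longrightarrow> (\<forall>p. iter_pd [Ej j] chi differentiable (at p))" by (rule spec)
  then have "iter_pd [Ej j] chi differentiable (at p)" using Ej_Basis[of j] by (cases p) simp
  then show ?thesis unfolding deta_eq .
qed

lemma deta_cont: "continuous_on UNIV (deta chi j)"
  using deta_diff by (simp add: continuous_at_imp_continuous_on differentiable_imp_continuous_within)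

lemma deta_meas[measurable]: "deta chi j \<in> borel_measurable borel"
  by (rule borel_measurable_continuous_onI[OF deta_cont])

lemma deta_bnd: "\<exists>B. \<forall>p. \<bar>deta chi j p\<bar> \<le> B"
proof -
  have "\<forall>es. set es \<subseteq> Basis \<longrightarrow> bounded (range (iter_pd es chi))" using chi unfolding smooth_bounded_def by auto
  then have "set [Ej j] \<subseteq> Basis \<longrightarrow> bounded (range (iter_pd [Ej j] chi))" by (rule spec)
  then have "bounded (range (iter_pd [Ej j] chi))" using Ej_Basis[of j] by simp
  then show ?thesis unfolding deta_eq by (auto simp: bounded_iff)
qed

lemma deta_vd: "((\<lambda>h. chi (p + h *\<^sub>R Ej j)) has_vector_derivative deta chi j p) (at 0)"
  unfolding deta_def Ej_def[symmetric] by (rule diff_dirderiv[OF chi_diff])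

lemma grad_meas[measurable]: "(\<lambda>p. norm (grad_eta chi p)) \<in> borel_measurable borel"
proof -
  have "continuous_on UNIV (grad_eta chi)"
    unfolding grad_eta_def by (intro continuous_on_vec_lambda deta_cont)
  then show ?thesis by (intro borel_measurable_continuous_onI continuous_intros)
qed

lemma grad_bnd: "\<exists>B. \<forall>p. norm (grad_eta chi p) \<le> B"
proof -
  have "\<forall>j. \<exists>B. \<forall>p. \<bar>deta chi j p\<bar> \<le> B" using deta_bnd by blast
  then obtain B where B: "\<And>j p. \<bar>deta chi j p\<bar> \<le> B j" by metis
  have "norm (grad_eta chi p) \<le> (\<Sum>j\<in>UNIV. B j)" for p
  proof -
    have "norm (grad_eta chi p) \<le> (\<Sum>j\<in>UNIV. \<bar>grad_eta chi p $ j\<bar>)" by (rule norm_le_l1_cart)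
    also have "\<dots> \<le> (\<Sum>j\<in>UNIV. B j)" unfolding grad_eta_def by (intro sum_mono) (simp add: B)
    finally show ?thesis .
  qed
  then show ?thesis by blast
qed

end


lemma jbr_cont: "continuous_on UNIV (jbr :: 'a::real_normed_vector \<Rightarrow> real)"
  unfolding jbr_def[abs_def] by (intro continuous_intros)

lemma jbr_meas[measurable]: "(jbr :: 'a::euclidean_space \<Rightarrow> real) \<in> borel_measurable borel"
  by (rule borel_measurable_continuous_onI[OF jbr_cont])

lemma fst_meas[measurable]: "(fst :: ('a::second_countable_topology \<times> 'b::second_countable_topology) \<Rightarrow> 'a) \<in> borel_measurable borel"
  by (rule borel_measurable_continuous_onI[OF continuous_on_fst[OF continuous_on_id]])

lemma snd_meas[measurable]: "(snd :: ('a::second_countable_topology \<times> 'b::second_countable_topology) \<Rightarrow> 'b) \<in> borel_measurable borel"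
  by (rule borel_measurable_continuous_onI[OF continuous_on_snd[OF continuous_on_id]])

lemma cnj_meas[measurable]: "cnj \<in> borel_measurable borel"
  by (rule borel_measurable_continuous_onI) (intro continuous_intros)

lemma vec_nth_meas[measurable]: "(\<lambda>x::real^'n. x $ j) \<in> borel_measurable borel"
  by (rule borel_measurable_continuous_onI) (intro continuous_intros)

lemma (in testpt) meas_vfhat'[measurable]: "(\<lambda>x. vfhat f j x) \<in> borel_measurable borel"
  using meas_vfhat[of j] by simp

lemma mm: "0 \<le> a \<Longrightarrow> a \<le> b \<Longrightarrow> 0 \<le> c \<Longrightarrow> c \<le> (d::real) \<Longrightarrow> a * c \<le> b * d"
  by (meson mult_mono order_trans)

lemma comps:
  fixes \<omega> :: "'d::finite pt"
  shows "\<bar>fst \<omega>\<bar> \<le> norm \<omega>" "norm (fst (snd \<omega>)) \<le> norm \<omega>" "norm (snd (snd \<omega>)) \<le> norm \<omega>"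
    "\<bar>fst (snd \<omega>) $ j\<bar> \<le> norm \<omega>"
proof -
  obtain a b c where w: "\<omega> = (a, b, c)" by (cases \<omega>)
  have 1: "norm a \<le> norm \<omega>" unfolding w by (rule norm_fst_le)
  have 2: "norm (b, c) \<le> norm \<omega>" unfolding w by (rule norm_snd_le)
  have 3: "norm b \<le> norm (b, c)" "norm c \<le> norm (b, c)" by (rule norm_fst_le, rule norm_snd_le)
  show "\<bar>fst \<omega>\<bar> \<le> norm \<omega>" using 1 w by simp
  show a: "norm (fst (snd \<omega>)) \<le> norm \<omega>" using 2 3 w by simp
  show "norm (snd (snd \<omega>)) \<le> norm \<omega>" using 2 3 w by simp
  show "\<bar>fst (snd \<omega>) $ j\<bar> \<le> norm \<omega>" using component_le_norm_cart[of "fst (snd \<omega>)" j] a by linarith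
qed

lemma X_ge1: "1 \<le> 1 + (norm (\<omega>::'a::real_normed_vector))\<^sup>2" by simp


locale both = testpt f + chifn chi for f chi :: "'d::finite pt \<Rightarrow> real"
begin

lemma Xop_eq: "Xop u f \<omega> = \<i> * (of_real (fst \<omega>) * fhat f \<omega> + (\<Sum>j\<in>UNIV. of_real (fst (snd \<omega>) $ j) * vfhat f j \<omega>)
   + (\<Sum>j\<in>UNIV. of_real (fst (snd \<omega>) $ j) * uconv u f j \<omega>))"
  by (cases \<omega>) (simp add: Xop_def deta_fhat algebra_simps sum_distrib_left sum_subtractf[symmetric] sum.distrib[symmetric])

lemma part2:
  fixes u :: "real \<times> (real^'d) \<Rightarrow> real^'d" and s r :: real
  assumes int2: "integrable lborel (\<lambda>(\<tau>, \<xi>, \<eta>).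
       complex_of_real (chi (\<tau>, \<xi>, \<eta>) * \<tau> * jbr \<tau> powr (2 * s - 2) * jbr \<eta> powr (- 2 * r))
       * (\<Sum>j\<in>UNIV. of_real (\<xi> $ j) * uconv u f j (\<tau>, \<xi>, \<eta>)) * cnj (fhat f (\<tau>, \<xi>, \<eta>)))"
  shows
   "((LINT \<omega>|lborel. (case \<omega> of (\<tau>, \<xi>, \<eta>) \<Rightarrow>
        chi \<omega> * \<bar>\<tau>\<bar>\<^sup>2 * jbr \<tau> powr (2 * s - 2) * jbr \<eta> powr (- 2 * r) * (cmod (fhat f \<omega>))\<^sup>2))
    = - Re (LINT \<omega>|lborel. (case \<omega> of (\<tau>, \<xi>, \<eta>) \<Rightarrow>
        complex_of_real (chi \<omega> * \<tau> * jbr \<tau> powr (2 * s - 2) * jbr \<eta> powr (- 2 * r))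
        * (\<Sum>j\<in>UNIV. of_real (\<xi> $ j) * vfhat f j \<omega>) * cnj (fhat f \<omega>)))
      + Im (LINT \<omega>|lborel. (case \<omega> of (\<tau>, \<xi>, \<eta>) \<Rightarrow>
        complex_of_real (chi \<omega> * \<tau> * jbr \<tau> powr (2 * s - 2) * jbr \<eta> powr (- 2 * r))
        * Xop u f \<omega> * cnj (fhat f \<omega>)))
      - Re (LINT \<omega>|lborel. (case \<omega> of (\<tau>, \<xi>, \<eta>) \<Rightarrow>
        complex_of_real (chi \<omega> * \<tau> * jbr \<tau> powr (2 * s - 2) * jbr \<eta> powr (- 2 * r))
        * (\<Sum>j\<in>UNIV. of_real (\<xi> $ j) * uconv u f j \<omega>) * cnj (fhat f \<omega>))))"
proof -
  define w where "w \<omega> = chi \<omega> * fst \<omega> * jbr (fst \<omega>) powr (2 * s - 2) * jbr (snd (snd \<omega>)) powr (- 2 * r)" for \<omega> :: "'d pt"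
  define V where "V \<omega> = (\<Sum>j\<in>UNIV. of_real (fst (snd \<omega>) $ j) * vfhat f j \<omega>)" for \<omega> :: "'d pt"
  define U where "U \<omega> = (\<Sum>j\<in>UNIV. of_real (fst (snd \<omega>) $ j) * uconv u f j \<omega>)" for \<omega> :: "'d pt"
  define L where "L \<omega> = chi \<omega> * \<bar>fst \<omega>\<bar>\<^sup>2 * jbr (fst \<omega>) powr (2 * s - 2) * jbr (snd (snd \<omega>)) powr (- 2 * r) * (cmod (fhat f \<omega>))\<^sup>2" for \<omega> :: "'d pt"
  define B2 where "B2 \<omega> = of_real (w \<omega>) * V \<omega> * cnj (fhat f \<omega>)" for \<omega>
  define B3 where "B3 \<omega> = of_real (w \<omega>) * U \<omega> * cnj (fhat f \<omega>)" for \<omega>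
  define A where "A \<omega> = of_real (w \<omega>) * Xop u f \<omega> * cnj (fhat f \<omega>)" for \<omega>
  have eL: "(\<lambda>\<omega>. case \<omega> of (\<tau>, \<xi>, \<eta>) \<Rightarrow>
        chi \<omega> * \<bar>\<tau>\<bar>\<^sup>2 * jbr \<tau> powr (2 * s - 2) * jbr \<eta> powr (- 2 * r) * (cmod (fhat f \<omega>))\<^sup>2) = L"
    by (auto simp: fun_eq_iff L_def split: prod.splits)
  have eB2: "(\<lambda>\<omega>. case \<omega> of (\<tau>, \<xi>, \<eta>) \<Rightarrow>
        complex_of_real (chi \<omega> * \<tau> * jbr \<tau> powr (2 * s - 2) * jbr \<eta> powr (- 2 * r))
        * (\<Sum>j\<in>UNIV. of_real (\<xi> $ j) * vfhat f j \<omega>) * cnj (fhat f \<omega>)) = B2"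
    by (auto simp: fun_eq_iff B2_def w_def V_def split: prod.splits)
  have eB3: "(\<lambda>\<omega>. case \<omega> of (\<tau>, \<xi>, \<eta>) \<Rightarrow>
        complex_of_real (chi \<omega> * \<tau> * jbr \<tau> powr (2 * s - 2) * jbr \<eta> powr (- 2 * r))
        * (\<Sum>j\<in>UNIV. of_real (\<xi> $ j) * uconv u f j \<omega>) * cnj (fhat f \<omega>)) = B3"
    by (auto simp: fun_eq_iff B3_def w_def U_def split: prod.splits)
  have eB3': "(\<lambda>(\<tau>, \<xi>, \<eta>).
       complex_of_real (chi (\<tau>, \<xi>, \<eta>) * \<tau> * jbr \<tau> powr (2 * s - 2) * jbr \<eta> powr (- 2 * r))
       * (\<Sum>j\<in>UNIV. of_real (\<xi> $ j) * uconv u f j (\<tau>, \<xi>, \<eta>)) * cnj (fhat f (\<tau>, \<xi>, \<eta>))) = B3"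
    by (auto simp: fun_eq_iff B3_def w_def U_def split: prod.splits)
  have eA: "(\<lambda>\<omega>. case \<omega> of (\<tau>, \<xi>, \<eta>) \<Rightarrow>
        complex_of_real (chi \<omega> * \<tau> * jbr \<tau> powr (2 * s - 2) * jbr \<eta> powr (- 2 * r))
        * Xop u f \<omega> * cnj (fhat f \<omega>)) = A"
    by (auto simp: fun_eq_iff A_def w_def split: prod.splits)
  have iB3: "integrable lborel B3" using int2 unfolding eB3' .
  have Aeq: "A = (\<lambda>\<omega>. \<i> * (of_real (L \<omega>) + B2 \<omega> + B3 \<omega>))"
  proof
    fix \<omega>
    have "fhat f \<omega> * cnj (fhat f \<omega>) = of_real ((cmod (fhat f \<omega>))\<^sup>2)" by (metis complex_norm_square)
    then show "A \<omega> = \<i> * (of_real (L \<omega>) + B2 \<omega> + B3 \<omega>)"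
      unfolding A_def Xop_eq L_def B2_def B3_def w_def V_def[symmetric] U_def[symmetric]
      by (simp add: algebra_simps power2_eq_square)
  qed
  obtain Bc where Bc: "\<And>p. \<bar>chi p\<bar> \<le> Bc" using chi_bnd by blast
  have Bc0: "0 \<le> Bc" using Bc[of 0] by linarith
  define K where "K = nat \<lceil>\<bar>2 * s - 2\<bar> + \<bar>2 * r\<bar>\<rceil>"
  have K1: "\<bar>2 * s - 2\<bar> \<le> 2 * real K" "\<bar>- 2 * r\<bar> \<le> 2 * real K" unfolding K_def by linarith+
  have jb: "jbr (fst \<omega>) powr (2 * s - 2) \<le> (1 + (norm \<omega>)\<^sup>2)^K"
     "jbr (snd (snd \<omega>)) powr (- 2 * r) \<le> (1 + (norm \<omega>)\<^sup>2)^K" for \<omega> :: "'d pt"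
    using comps[of \<omega>] K1 by (auto intro!: jbr_powr_bound)
  have tX: "\<bar>fst \<omega>\<bar> \<le> 1 + (norm \<omega>)\<^sup>2" "\<bar>fst (snd \<omega>) $ j\<bar> \<le> 1 + (norm \<omega>)\<^sup>2" for \<omega> :: "'d pt" and j
  proof -
    show "\<bar>fst \<omega>\<bar> \<le> 1 + (norm \<omega>)\<^sup>2" using le_1X comps(1) by (metis real_norm_def)
    show "\<bar>fst (snd \<omega>) $ j\<bar> \<le> 1 + (norm \<omega>)\<^sup>2" using le_1X comps(4) by (metis real_norm_def)
  qed
  have t2X: "\<bar>fst \<omega>\<bar>\<^sup>2 \<le> 1 + (norm \<omega>)\<^sup>2" for \<omega> :: "'d pt"
  proof -
    have "\<bar>fst \<omega>\<bar>\<^sup>2 \<le> (norm \<omega>)\<^sup>2" using comps(1)[of \<omega>] by (intro power_mono) auto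
    then show ?thesis by simp
  qed
  have iL: "integrable lborel L"
  proof (rule integrable_decr[where n="\<lambda>\<omega>. cmod (fhat f \<omega>) * cmod (fhat f \<omega>)" and A=Bc and K="K+K+1"])
    show "L \<in> borel_measurable lborel" unfolding L_def measurable_lborel2 by measurable
    show "decr (\<lambda>\<omega>. cmod (fhat f \<omega>) * cmod (fhat f \<omega>))" by (intro decr_mult decr_fhat) auto
    show "0 \<le> Bc" by (rule Bc0)
    fix \<omega> :: "'d pt"
    let ?X = "1 + (norm \<omega>)\<^sup>2"
    have "norm (L \<omega>) = \<bar>chi \<omega>\<bar> * \<bar>fst \<omega>\<bar>\<^sup>2 * jbr (fst \<omega>) powr (2 * s - 2) * jbr (snd (snd \<omega>)) powr (- 2 * r) * (cmod (fhat f \<omega>))\<^sup>2"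
      unfolding L_def by (simp add: abs_mult)
    also have "\<dots> \<le> Bc * ?X * ?X^K * ?X^K * (cmod (fhat f \<omega>))\<^sup>2"
      by (intro mm Bc t2X jb) auto
    also have "\<dots> = Bc * (?X^(K+K+1) * (cmod (fhat f \<omega>) * cmod (fhat f \<omega>)))"
      by (simp add: power_add power2_eq_square mult_ac)
    finally show "norm (L \<omega>) \<le> Bc * (?X^(K+K+1) * (cmod (fhat f \<omega>) * cmod (fhat f \<omega>)))" .
  qed
  have iB2: "integrable lborel B2"
  proof (rule integrable_decr[where n="\<lambda>\<omega>. (\<Sum>j\<in>UNIV. cmod (vfhat f j \<omega>)) * cmod (fhat f \<omega>)" and A=Bc and K="K+K+2"])
    show "B2 \<in> borel_measurable lborel" unfolding B2_def w_def V_def measurable_lborel2 by measurable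
    show "decr (\<lambda>\<omega>. (\<Sum>j\<in>UNIV. cmod (vfhat f j \<omega>)) * cmod (fhat f \<omega>))"
      by (intro decr_mult decr_fhat decr_sum decr_vfhat sum_nonneg) auto
    show "0 \<le> Bc" by (rule Bc0)
    fix \<omega> :: "'d pt"
    let ?X = "1 + (norm \<omega>)\<^sup>2"
    have nV: "norm (V \<omega>) \<le> ?X * (\<Sum>j\<in>UNIV. cmod (vfhat f j \<omega>))"
    proof -
      have "norm (V \<omega>) \<le> (\<Sum>j\<in>UNIV. norm (of_real (fst (snd \<omega>) $ j) * vfhat f j \<omega>))"
        unfolding V_def by (rule norm_sum)
      also have "\<dots> \<le> (\<Sum>j\<in>UNIV. ?X * cmod (vfhat f j \<omega>))"
        by (intro sum_mono) (auto simp: norm_mult intro!: mult_right_mono tX)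
      finally show ?thesis by (simp add: sum_distrib_left)
    qed
    have "norm (B2 \<omega>) = \<bar>chi \<omega>\<bar> * \<bar>fst \<omega>\<bar> * jbr (fst \<omega>) powr (2 * s - 2) * jbr (snd (snd \<omega>)) powr (- 2 * r) * norm (V \<omega>) * cmod (fhat f \<omega>)"
      unfolding B2_def w_def by (simp add: abs_mult norm_mult)
    also have "\<dots> \<le> Bc * ?X * ?X^K * ?X^K * (?X * (\<Sum>j\<in>UNIV. cmod (vfhat f j \<omega>))) * cmod (fhat f \<omega>)"
    proof (intro mm)
      show "norm (V \<omega>) \<le> ?X * (\<Sum>j\<in>UNIV. cmod (vfhat f j \<omega>))" by (rule nV)
      show "\<bar>chi \<omega>\<bar> \<le> Bc" by (rule Bc)
      show "\<bar>fst \<omega>\<bar> \<le> ?X" by (rule tX)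
      show "jbr (fst \<omega>) powr (2 * s - 2) \<le> ?X^K" by (rule jb)
      show "jbr (snd (snd \<omega>)) powr (- 2 * r) \<le> ?X^K" by (rule jb)
    qed (simp_all add: zero_le_mult_iff)
    also have "\<dots> = Bc * (?X^(K+K+2) * ((\<Sum>j\<in>UNIV. cmod (vfhat f j \<omega>)) * cmod (fhat f \<omega>)))"
      by (simp add: power_add power2_eq_square mult_ac)
    finally show "norm (B2 \<omega>) \<le> Bc * (?X^(K+K+2) * ((\<Sum>j\<in>UNIV. cmod (vfhat f j \<omega>)) * cmod (fhat f \<omega>)))" .
  qed
  have iL': "integrable lborel (\<lambda>\<omega>. complex_of_real (L \<omega>))" using iL by (rule integrable_of_real)
  have "integral\<^sup>L lborel A = integral\<^sup>L lborel (\<lambda>\<omega>. \<i> * (of_real (L \<omega>) + B2 \<omega> + B3 \<omega>))"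
    by (simp only: Aeq)
  also have "\<dots> = \<i> * integral\<^sup>L lborel (\<lambda>\<omega>. of_real (L \<omega>) + B2 \<omega> + B3 \<omega>)"
    by (rule integral_mult_right_zero)
  also have "integral\<^sup>L lborel (\<lambda>\<omega>. of_real (L \<omega>) + B2 \<omega> + B3 \<omega>)
      = integral\<^sup>L lborel (\<lambda>\<omega>. complex_of_real (L \<omega>)) + integral\<^sup>L lborel B2 + integral\<^sup>L lborel B3"
    using iL' iB2 iB3 by (simp add: integral_add)
  also have "integral\<^sup>L lborel (\<lambda>\<omega>. complex_of_real (L \<omega>)) = of_real (integral\<^sup>L lborel L)"
    by (rule integral_complex_of_real)
  finally have "Im (integral\<^sup>L lborel A) = integral\<^sup>L lborel L + Re (integral\<^sup>L lborel B2) + Re (integral\<^sup>L lborel B3)"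
    by simp
  then show ?thesis unfolding eL eB2 eB3 eA by linarith
qed

end


lemma jbr_powr_eq: "jbr x powr a = (1 + (norm x)\<^sup>2) powr (a / 2)"
proof -
  have p: "0 < 1 + (norm x)\<^sup>2" by (simp add: add_pos_nonneg)
  have "jbr x = (1 + (norm x)\<^sup>2) powr (1/2)" unfolding jbr_def using p by (simp add: powr_half_sqrt)
  then show ?thesis by (simp add: powr_powr)
qed

lemma vd_jbr:
  fixes x e :: "'a::real_inner"
  shows "((\<lambda>h. jbr (x + h *\<^sub>R e) powr a) has_vector_derivative (a * (x \<bullet> e) * jbr x powr (a - 2))) (at 0)"
proof -
  have q: "((\<lambda>h. 1 + (norm (x + h *\<^sub>R e))\<^sup>2) has_real_derivative (2 * (x \<bullet> e))) (at 0)"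
  proof -
    have "((\<lambda>h. 1 + (x + h *\<^sub>R e) \<bullet> (x + h *\<^sub>R e)) has_real_derivative
        ((x + 0 *\<^sub>R e) \<bullet> (1 *\<^sub>R e) + (1 *\<^sub>R e) \<bullet> (x + 0 *\<^sub>R e))) (at 0)"
      unfolding has_field_derivative_def
      by (auto intro!: derivative_eq_intros simp: inner_add_left inner_add_right fun_eq_iff inner_commute algebra_simps)
    then show ?thesis by (simp add: power2_norm_eq_inner inner_commute)
  qed
  have p: "0 < 1 + (norm (x + 0 *\<^sub>R e))\<^sup>2" by (simp add: add_pos_nonneg)
  have D1: "((\<lambda>h. (1 + (norm (x + h *\<^sub>R e))\<^sup>2) powr (a / 2)) has_real_derivative
      ((a / 2) * (1 + (norm (x + 0 *\<^sub>R e))\<^sup>2) powr (a / 2 - 1) * (2 * (x \<bullet> e)))) (at 0)"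
    using DERIV_fun_powr[OF q, of "a/2"] p by simp
  have eq: "a * (x \<bullet> e) * jbr x powr (a - 2) = (a / 2) * (1 + (norm (x + 0 *\<^sub>R e))\<^sup>2) powr (a / 2 - 1) * (2 * (x \<bullet> e))"
    by (simp add: jbr_powr_eq diff_divide_distrib)
  show ?thesis unfolding eq unfolding jbr_powr_eq
    using D1 unfolding has_real_derivative_iff_has_vector_derivative .
qed

lemma vd_cmod2:
  fixes z :: "real \<Rightarrow> complex"
  assumes "(z has_vector_derivative z') (at 0)"
  shows "((\<lambda>h. (cmod (z h))\<^sup>2) has_vector_derivative (2 * Re (z' * cnj (z 0)))) (at 0)"
proof -
  have "((\<lambda>h. z h * cnj (z h)) has_vector_derivative (z 0 * cnj z' + z' * cnj (z 0))) (at 0)"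
    by (intro has_vector_derivative_mult assms has_vector_derivative_cnj)
  then have "((\<lambda>h. Re (z h * cnj (z h))) has_vector_derivative Re (z 0 * cnj z' + z' * cnj (z 0))) (at 0)"
    by (rule bounded_linear.has_vector_derivative[OF bounded_linear_Re])
  moreover have "(\<lambda>h. Re (z h * cnj (z h))) = (\<lambda>h. (cmod (z h))\<^sup>2)"
    by (rule ext) (metis Re_complex_of_real complex_norm_square)
  moreover have "Re (z 0 * cnj z' + z' * cnj (z 0)) = 2 * Re (z' * cnj (z 0))"
    by simp
  ultimately show ?thesis by simp
qed

lemma shift_decay:
  fixes \<omega> E :: "'a::real_normed_vector"
  assumes "\<bar>s\<bar> \<le> 1" "norm E = 1"
  shows "inverse ((1 + (norm (\<omega> + s *\<^sub>R E))\<^sup>2)^M) \<le> 3^M * inverse ((1 + (norm \<omega>)\<^sup>2)^M)"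
proof -
  have "norm \<omega> \<le> norm (\<omega> + s *\<^sub>R E) + 1"
    using norm_triangle_ineq4[of "\<omega> + s *\<^sub>R E" "s *\<^sub>R E"] assms by simp
  then have "(norm \<omega>)\<^sup>2 \<le> (norm (\<omega> + s *\<^sub>R E) + 1)\<^sup>2" by (intro power_mono) auto
  also have "\<dots> \<le> 2 * (norm (\<omega> + s *\<^sub>R E))\<^sup>2 + 2"
    using sum_squares_ge_zero[of "norm (\<omega> + s *\<^sub>R E) - 1" 0]
    by (simp add: power2_eq_square algebra_simps)
  finally have h0: "(norm \<omega>)\<^sup>2 \<le> 2 * (norm (\<omega> + s *\<^sub>R E))\<^sup>2 + 2" .
  have h: "1 + (norm \<omega>)\<^sup>2 \<le> 3 * (1 + (norm (\<omega> + s *\<^sub>R E))\<^sup>2)"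
    unfolding distrib_left using h0 zero_le_power2[of "norm (\<omega> + s *\<^sub>R E)"] by linarith
  have "(1 + (norm \<omega>)\<^sup>2)^M \<le> (3 * (1 + (norm (\<omega> + s *\<^sub>R E))\<^sup>2))^M"
    by (intro power_mono h) (simp add: add_nonneg_nonneg)
  then have "(1 + (norm \<omega>)\<^sup>2)^M \<le> 3^M * (1 + (norm (\<omega> + s *\<^sub>R E))\<^sup>2)^M"
    by (simp only: power_mult_distrib)
  moreover have "0 < (1 + (norm \<omega>)\<^sup>2)^M" "0 < (1 + (norm (\<omega> + s *\<^sub>R E))\<^sup>2)^M"
    by (simp_all add: add_pos_nonneg)
  ultimately show ?thesis by (simp add: field_simps)
qed


lemma vd_eq: "(f has_vector_derivative a) F \<Longrightarrow> a = b \<Longrightarrow> (f has_vector_derivative b) F"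
  by simp

locale part1 = both f chi for f chi :: "'d::finite pt \<Rightarrow> real" +
  fixes s r :: real
  assumes r0: "r \<ge> 0" and chi0: "\<And>\<omega>. chi \<omega> \<ge> 0"
begin

definition J where "J \<omega> = jbr (fst (snd \<omega>)) powr (2 * s - 2) * jbr (snd (snd \<omega>)) powr (- 2 * r)"
definition W where "W \<omega> = chi \<omega> * (fst (snd \<omega>) \<bullet> snd (snd \<omega>)) * J \<omega>"
definition N2 where "N2 \<omega> = (cmod (fhat f \<omega>))\<^sup>2"
definition dW where "dW j \<omega> = deta chi j \<omega> * (fst (snd \<omega>) \<bullet> snd (snd \<omega>)) * J \<omega>
   + chi \<omega> * (fst (snd \<omega>) $ j) * J \<omega>
   + chi \<omega> * (fst (snd \<omega>) \<bullet> snd (snd \<omega>)) * (jbr (fst (snd \<omega>)) powr (2 * s - 2) * ((- 2 * r) * (snd (snd \<omega>) $ j) * jbr (snd (snd \<omega>)) powr (- 2 * r - 2)))"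
definition dN2 where "dN2 j \<omega> = 2 * Re ((- \<i> * vfhat f j \<omega>) * cnj (fhat f \<omega>))"
definition Dj where "Dj j \<omega> = fst (snd \<omega>) $ j * (W \<omega> * dN2 j \<omega> + dW j \<omega> * N2 \<omega>)"
definition gj where "gj j \<omega> = fst (snd \<omega>) $ j * (W \<omega> * N2 \<omega>)"

lemma der_gj: "((\<lambda>h. gj j (\<omega> + h *\<^sub>R Ej j)) has_vector_derivative Dj j \<omega>) (at 0)"
proof -
  obtain \<tau> \<xi> \<eta> where w: "\<omega> = (\<tau>, \<xi>, \<eta>)" by (cases \<omega>)
  define e :: "real^'d" where "e = axis j 1"
  have sh: "\<omega> + h *\<^sub>R Ej j = (\<tau>, \<xi>, \<eta> + h *\<^sub>R e)" for h unfolding w Ej_def e_def by simp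
  have fe: "(\<lambda>h. gj j (\<omega> + h *\<^sub>R Ej j)) = (\<lambda>h. \<xi> $ j * ((chi (\<omega> + h *\<^sub>R Ej j) * (\<xi> \<bullet> (\<eta> + h *\<^sub>R e))
      * (jbr \<xi> powr (2 * s - 2) * jbr (\<eta> + h *\<^sub>R e) powr (- 2 * r))) * (cmod (fhat f (\<omega> + h *\<^sub>R Ej j)))\<^sup>2))"
    unfolding gj_def W_def J_def N2_def by (simp add: sh)
  have d1: "((\<lambda>h. chi (\<omega> + h *\<^sub>R Ej j)) has_vector_derivative deta chi j \<omega>) (at 0)" by (rule deta_vd)
  have d2: "((\<lambda>h. \<xi> \<bullet> (\<eta> + h *\<^sub>R e)) has_vector_derivative (\<xi> $ j)) (at 0)"
    unfolding has_real_derivative_iff_has_vector_derivative[symmetric] e_def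
    by (auto intro!: derivative_eq_intros simp: inner_add_right inner_axis)
  have d3: "((\<lambda>h. jbr (\<eta> + h *\<^sub>R e) powr (- 2 * r)) has_vector_derivative ((- 2 * r) * (\<eta> $ j) * jbr \<eta> powr (- 2 * r - 2))) (at 0)"
    using vd_jbr[of \<eta> e "- 2 * r"] unfolding e_def by (simp add: inner_axis)
  have d4: "((\<lambda>h. (cmod (fhat f (\<omega> + h *\<^sub>R Ej j)))\<^sup>2) has_vector_derivative dN2 j \<omega>) (at 0)"
  proof -
    have "((\<lambda>h. fhat f (\<omega> + h *\<^sub>R Ej j)) has_vector_derivative (- \<i> * vfhat f j \<omega>)) (at 0)"
      unfolding fhat_eq vfhat_eq by (rule FT_deriv_eta)
    from vd_cmod2[OF this] show ?thesis unfolding dN2_def by simp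
  qed
  have d23: "((\<lambda>h. jbr \<xi> powr (2 * s - 2) * jbr (\<eta> + h *\<^sub>R e) powr (- 2 * r)) has_vector_derivative
     (jbr \<xi> powr (2 * s - 2) * ((- 2 * r) * (\<eta> $ j) * jbr \<eta> powr (- 2 * r - 2)))) (at 0)"
    by (rule has_vector_derivative_mult_right[OF d3])
  have d12: "((\<lambda>h. chi (\<omega> + h *\<^sub>R Ej j) * (\<xi> \<bullet> (\<eta> + h *\<^sub>R e))) has_vector_derivative
     (chi (\<omega> + 0 *\<^sub>R Ej j) * (\<xi> $ j) + deta chi j \<omega> * (\<xi> \<bullet> (\<eta> + 0 *\<^sub>R e)))) (at 0)"
    by (rule has_vector_derivative_mult[OF d1 d2])
  have dWW: "((\<lambda>h. chi (\<omega> + h *\<^sub>R Ej j) * (\<xi> \<bullet> (\<eta> + h *\<^sub>R e)) * (jbr \<xi> powr (2 * s - 2) * jbr (\<eta> + h *\<^sub>R e) powr (- 2 * r)))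
     has_vector_derivative dW j \<omega>) (at 0)"
    by (rule vd_eq[OF has_vector_derivative_mult[OF d12 d23]]) (simp add: dW_def J_def w algebra_simps)
  have "((\<lambda>h. (chi (\<omega> + h *\<^sub>R Ej j) * (\<xi> \<bullet> (\<eta> + h *\<^sub>R e)) * (jbr \<xi> powr (2 * s - 2) * jbr (\<eta> + h *\<^sub>R e) powr (- 2 * r)))
     * (cmod (fhat f (\<omega> + h *\<^sub>R Ej j)))\<^sup>2) has_vector_derivative W \<omega> * dN2 j \<omega> + dW j \<omega> * N2 \<omega>) (at 0)"
    by (rule vd_eq[OF has_vector_derivative_mult[OF dWW d4]]) (simp add: W_def J_def N2_def w)
  then show ?thesis unfolding fe Dj_def
    by (rule vd_eq[OF has_vector_derivative_mult_right]) (simp add: w)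
qed

end


lemma Xpow_mono: "a \<le> b \<Longrightarrow> (1 + (norm (\<omega>::'a::real_normed_vector))\<^sup>2) ^ a \<le> (1 + (norm \<omega>)\<^sup>2) ^ b"
  by (rule power_increasing) auto

lemma X_nonneg: "0 \<le> (1 + (norm (\<omega>::'a::real_normed_vector))\<^sup>2) ^ a"
  by (simp add: add_nonneg_nonneg)

lemma pw1: "(b::real) * x^2 * x^(k+k) = b * x^(k+k+2)"
  by (simp only: power_add mult_ac)

lemma pw2: "(b::real) * x^2 * (x^k * ((2 * r) * x * x^k)) = 2 * r * b * x^(k+k+3)"
  by (simp only: power_add power2_eq_square power3_eq_cube mult_ac)

context part1
begin

definition KK where "KK = nat \<lceil>\<bar>2 * s - 2\<bar> + \<bar>2 * r\<bar> + \<bar>2 * s\<bar> + \<bar>1 - 2 * r\<bar> + 2\<rceil>"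

lemma jbK:
  assumes "\<bar>a\<bar> \<le> \<bar>2 * s - 2\<bar> + \<bar>2 * r\<bar> + \<bar>2 * s\<bar> + \<bar>1 - 2 * r\<bar> + 2" "norm x \<le> norm \<omega>"
  shows "jbr x powr a \<le> (1 + (norm \<omega>)\<^sup>2) ^ KK"
proof (rule jbr_powr_bound[OF assms(2)])
  have "\<bar>2 * s - 2\<bar> + \<bar>2 * r\<bar> + \<bar>2 * s\<bar> + \<bar>1 - 2 * r\<bar> + 2 \<le> real KK"
    unfolding KK_def by (rule real_nat_ceiling_ge)
  then show "\<bar>a\<bar> \<le> 2 * real KK" using assms(1) by linarith
qed

lemma ex_bounds: "\<exists>Bc Bd. (\<forall>p. \<bar>chi p\<bar> \<le> Bc) \<and> (\<forall>j p. \<bar>deta chi j p\<bar> \<le> Bd) \<and> 0 \<le> Bc \<and> 0 \<le> Bd"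
proof -
  obtain Bc where Bc: "\<And>p. \<bar>chi p\<bar> \<le> Bc" using chi_bnd by blast
  have "\<forall>j. \<exists>B. \<forall>p. \<bar>deta chi j p\<bar> \<le> B" using deta_bnd by blast
  then obtain B where B: "\<And>j p. \<bar>deta chi j p\<bar> \<le> B j" by metis
  have B0: "0 \<le> B j" for j using B[of j 0] by linarith
  have "\<bar>deta chi j p\<bar> \<le> (\<Sum>j\<in>UNIV. B j)" for j p
  proof -
    have "B j \<le> (\<Sum>j\<in>UNIV. B j)"
      using B0 by (intro member_le_sum) auto
    then show ?thesis using B[of j p] by linarith
  qed
  moreover have "0 \<le> Bc" using Bc[of 0] by linarith
  moreover have "0 \<le> (\<Sum>j\<in>UNIV. B j)" using B0 by (intro sum_nonneg) auto
  ultimately show ?thesis using Bc by blast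
qed

definition Bc where "Bc = (SOME Bc. \<exists>Bd. (\<forall>p. \<bar>chi p\<bar> \<le> Bc) \<and> (\<forall>j p. \<bar>deta chi j p\<bar> \<le> Bd) \<and> 0 \<le> Bc \<and> 0 \<le> Bd)"
definition Bd where "Bd = (SOME Bd. (\<forall>p. \<bar>chi p\<bar> \<le> Bc) \<and> (\<forall>j p. \<bar>deta chi j p\<bar> \<le> Bd) \<and> 0 \<le> Bc \<and> 0 \<le> Bd)"

lemma BcBd: "\<bar>chi p\<bar> \<le> Bc" "\<bar>deta chi j p\<bar> \<le> Bd" "0 \<le> Bc" "0 \<le> Bd"
proof -
  have "\<exists>Bd. (\<forall>p. \<bar>chi p\<bar> \<le> Bc) \<and> (\<forall>j p. \<bar>deta chi j p\<bar> \<le> Bd) \<and> 0 \<le> Bc \<and> 0 \<le> Bd"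
    unfolding Bc_def using ex_bounds by (rule someI_ex)
  then have "(\<forall>p. \<bar>chi p\<bar> \<le> Bc) \<and> (\<forall>j p. \<bar>deta chi j p\<bar> \<le> Bd) \<and> 0 \<le> Bc \<and> 0 \<le> Bd"
    unfolding Bd_def by (rule someI_ex)
  then show "\<bar>chi p\<bar> \<le> Bc" "\<bar>deta chi j p\<bar> \<le> Bd" "0 \<le> Bc" "0 \<le> Bd" by blast+
qed

lemma cX:
  fixes \<omega> :: "'d pt"
  shows "\<bar>fst (snd \<omega>) $ j\<bar> \<le> 1 + (norm \<omega>)\<^sup>2" "\<bar>snd (snd \<omega>) $ j\<bar> \<le> 1 + (norm \<omega>)\<^sup>2"
    "norm (fst (snd \<omega>)) \<le> 1 + (norm \<omega>)\<^sup>2" "norm (snd (snd \<omega>)) \<le> 1 + (norm \<omega>)\<^sup>2"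
    "\<bar>fst \<omega>\<bar> \<le> 1 + (norm \<omega>)\<^sup>2"
    "\<bar>fst (snd \<omega>) \<bullet> snd (snd \<omega>)\<bar> \<le> (1 + (norm \<omega>)\<^sup>2)^2"
proof -
  show a: "norm (fst (snd \<omega>)) \<le> 1 + (norm \<omega>)\<^sup>2" using le_1X comps(2) by blast
  show b: "norm (snd (snd \<omega>)) \<le> 1 + (norm \<omega>)\<^sup>2" using le_1X comps(3) by blast
  show "\<bar>fst (snd \<omega>) $ j\<bar> \<le> 1 + (norm \<omega>)\<^sup>2" using component_le_norm_cart[of "fst (snd \<omega>)" j] a by linarith
  show "\<bar>snd (snd \<omega>) $ j\<bar> \<le> 1 + (norm \<omega>)\<^sup>2" using component_le_norm_cart[of "snd (snd \<omega>)" j] b by linarith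
  show "\<bar>fst \<omega>\<bar> \<le> 1 + (norm \<omega>)\<^sup>2" using le_1X comps(1) by (metis real_norm_def)
  have "\<bar>fst (snd \<omega>) \<bullet> snd (snd \<omega>)\<bar> \<le> norm (fst (snd \<omega>)) * norm (snd (snd \<omega>))" by (rule Cauchy_Schwarz_ineq2)
  also have "\<dots> \<le> (1 + (norm \<omega>)\<^sup>2) * (1 + (norm \<omega>)\<^sup>2)" by (intro mult_mono a b) auto
  finally show "\<bar>fst (snd \<omega>) \<bullet> snd (snd \<omega>)\<bar> \<le> (1 + (norm \<omega>)\<^sup>2)^2" by (simp add: power2_eq_square)
qed

lemma J_bnd: "\<bar>J (\<omega>::'d pt)\<bar> \<le> (1 + (norm \<omega>)\<^sup>2)^(KK + KK)"
proof -
  have "\<bar>J \<omega>\<bar> = jbr (fst (snd \<omega>)) powr (2 * s - 2) * jbr (snd (snd \<omega>)) powr (- 2 * r)"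
    unfolding J_def by simp
  also have "\<dots> \<le> (1 + (norm \<omega>)\<^sup>2)^KK * (1 + (norm \<omega>)\<^sup>2)^KK"
    using comps(2)[of \<omega>] comps(3)[of \<omega>] by (intro mm jbK) auto
  finally show ?thesis by (simp add: power_add)
qed

lemma W_bnd: "\<bar>W \<omega>\<bar> \<le> Bc * (1 + (norm \<omega>)\<^sup>2)^(KK + KK + 2)"
proof -
  have "\<bar>W \<omega>\<bar> = \<bar>chi \<omega>\<bar> * \<bar>fst (snd \<omega>) \<bullet> snd (snd \<omega>)\<bar> * \<bar>J \<omega>\<bar>" unfolding W_def by (simp add: abs_mult)
  also have "\<dots> \<le> Bc * (1 + (norm \<omega>)\<^sup>2)^2 * (1 + (norm \<omega>)\<^sup>2)^(KK + KK)"
    by (intro mm BcBd cX J_bnd) auto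
  also have "\<dots> = Bc * (1 + (norm \<omega>)\<^sup>2)^(KK + KK + 2)" by (rule pw1)
  finally show ?thesis .
qed

lemma dW_bnd: "\<bar>dW j \<omega>\<bar> \<le> (Bd + Bc + 2 * r * Bc) * (1 + (norm \<omega>)\<^sup>2)^(KK + KK + 3)"
proof -
  let ?X = "1 + (norm \<omega>)\<^sup>2"
  have X1: "1 \<le> ?X" by simp
  have t1: "\<bar>deta chi j \<omega> * (fst (snd \<omega>) \<bullet> snd (snd \<omega>)) * J \<omega>\<bar> \<le> Bd * ?X^(KK + KK + 3)"
  proof -
    have "\<bar>deta chi j \<omega> * (fst (snd \<omega>) \<bullet> snd (snd \<omega>)) * J \<omega>\<bar> \<le> Bd * ?X^2 * ?X^(KK+KK)"
      unfolding abs_mult by (intro mm BcBd cX J_bnd) auto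
    also have "\<dots> \<le> Bd * ?X^(KK + KK + 3)"
      using Xpow_mono[of "KK+KK+2" "KK+KK+3" \<omega>] BcBd(4) by (simp add: power_add[symmetric] mult.assoc mult_left_mono add.commute)
    finally show ?thesis .
  qed
  have t2: "\<bar>chi \<omega> * (fst (snd \<omega>) $ j) * J \<omega>\<bar> \<le> Bc * ?X^(KK + KK + 3)"
  proof -
    have "\<bar>chi \<omega> * (fst (snd \<omega>) $ j) * J \<omega>\<bar> \<le> Bc * ?X * ?X^(KK+KK)"
      unfolding abs_mult by (intro mm BcBd cX J_bnd) auto
    also have "\<dots> \<le> Bc * ?X^(KK + KK + 3)"
      using Xpow_mono[of "KK+KK+1" "KK+KK+3" \<omega>] BcBd(3) by (simp add: power_add[symmetric] mult.assoc mult_left_mono add.commute)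
    finally show ?thesis .
  qed
  have t3: "\<bar>chi \<omega> * (fst (snd \<omega>) \<bullet> snd (snd \<omega>)) * (jbr (fst (snd \<omega>)) powr (2 * s - 2) * ((- 2 * r) * (snd (snd \<omega>) $ j) * jbr (snd (snd \<omega>)) powr (- 2 * r - 2)))\<bar>
      \<le> 2 * r * Bc * ?X^(KK + KK + 3)"
  proof -
    have "\<bar>chi \<omega> * (fst (snd \<omega>) \<bullet> snd (snd \<omega>)) * (jbr (fst (snd \<omega>)) powr (2 * s - 2) * ((- 2 * r) * (snd (snd \<omega>) $ j) * jbr (snd (snd \<omega>)) powr (- 2 * r - 2)))\<bar>
        = \<bar>chi \<omega>\<bar> * \<bar>fst (snd \<omega>) \<bullet> snd (snd \<omega>)\<bar> * (jbr (fst (snd \<omega>)) powr (2 * s - 2) * ((2 * r) * \<bar>snd (snd \<omega>) $ j\<bar> * jbr (snd (snd \<omega>)) powr (- 2 * r - 2)))"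
      using r0 by (simp add: abs_mult)
    also have "\<dots> \<le> Bc * ?X^2 * (?X^KK * ((2 * r) * ?X * ?X^KK))"
      using r0 by (intro mm BcBd cX jbK comps mult_nonneg_nonneg) auto
    also have "\<dots> = 2 * r * Bc * ?X^(KK + KK + 3)"
      by (rule pw2)
    finally show ?thesis .
  qed
  have "\<bar>dW j \<omega>\<bar> \<le> Bd * ?X^(KK + KK + 3) + Bc * ?X^(KK + KK + 3) + 2 * r * Bc * ?X^(KK + KK + 3)"
    unfolding dW_def using t1 t2 t3 by linarith
  then show ?thesis by (simp add: algebra_simps)
qed

end


lemma pw3: "(x::real) * ((b * x^(k+k+2)) * y) = b * (x^(k+k+3) * y)"
  by (simp only: power_add power2_eq_square power3_eq_cube mult_ac)

lemma pw4: "(x::real) * (c * x ^ n * y) = c * (x ^ Suc n * y)"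
  by (simp add: mult_ac)

context part1
begin

lemma dN2_bnd: "\<bar>dN2 j \<omega>\<bar> \<le> 2 * (cmod (vfhat f j \<omega>) * cmod (fhat f \<omega>))"
proof -
  have "\<bar>Re ((- \<i> * vfhat f j \<omega>) * cnj (fhat f \<omega>))\<bar> \<le> cmod ((- \<i> * vfhat f j \<omega>) * cnj (fhat f \<omega>))"
    by (rule abs_Re_le_cmod)
  also have "\<dots> = cmod (vfhat f j \<omega>) * cmod (fhat f \<omega>)" by (simp add: norm_mult)
  finally show ?thesis unfolding dN2_def by simp
qed

definition nn where "nn j \<omega> = cmod (vfhat f j \<omega>) * cmod (fhat f \<omega>) + cmod (fhat f \<omega>) * cmod (fhat f \<omega>)"

lemma nn_decr: "decr (nn j)"
  unfolding nn_def
proof -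
  have "decr (\<lambda>\<omega>. \<Sum>i\<in>{0::nat,1}. (if i = 0 then cmod (vfhat f j \<omega>) * cmod (fhat f \<omega>) else cmod (fhat f \<omega>) * cmod (fhat f \<omega>)))"
    by (intro decr_sum) (auto intro!: decr_mult decr_fhat decr_vfhat)
  then show "decr (\<lambda>\<omega>. cmod (vfhat f j \<omega>) * cmod (fhat f \<omega>) + cmod (fhat f \<omega>) * cmod (fhat f \<omega>))"
    by simp
qed

lemma nn_nonneg: "0 \<le> nn j \<omega>" unfolding nn_def by simp

lemma Dj_bnd: "\<bar>Dj j \<omega>\<bar> \<le> (3 * Bc + Bd + 2 * r * Bc) * ((1 + (norm \<omega>)\<^sup>2)^(KK + KK + 4) * nn j \<omega>)"
proof -
  let ?X = "1 + (norm \<omega>)\<^sup>2"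
  let ?cv = "cmod (vfhat f j \<omega>)" and ?cf = "cmod (fhat f \<omega>)"
  have X1: "1 \<le> ?X" by simp
  have p1: "\<bar>W \<omega> * dN2 j \<omega>\<bar> \<le> Bc * ?X^(KK + KK + 2) * (2 * (?cv * ?cf))"
    unfolding abs_mult by (intro mm W_bnd dN2_bnd) auto
  have p2: "\<bar>dW j \<omega> * N2 \<omega>\<bar> \<le> (Bd + Bc + 2 * r * Bc) * ?X^(KK + KK + 3) * (?cf * ?cf)"
    unfolding abs_mult N2_def by (intro mm dW_bnd) (auto simp: power2_eq_square)
  have q1: "Bc * ?X^(KK + KK + 2) * (2 * (?cv * ?cf)) \<le> 2 * Bc * ?X^(KK + KK + 3) * (?cv * ?cf + ?cf * ?cf)"
  proof -
    have "?X^(KK + KK + 2) \<le> ?X^(KK + KK + 3)" by (rule Xpow_mono) simp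
    then have "Bc * ?X^(KK + KK + 2) * (2 * (?cv * ?cf)) \<le> Bc * ?X^(KK + KK + 3) * (2 * (?cv * ?cf))"
      using BcBd(3) by (intro mult_right_mono mult_left_mono) auto
    also have "\<dots> \<le> Bc * ?X^(KK + KK + 3) * (2 * (?cv * ?cf + ?cf * ?cf))"
      using BcBd(3) by (intro mult_left_mono) (auto simp: X_nonneg)
    finally show ?thesis by (simp only: mult_ac)
  qed
  have q2: "(Bd + Bc + 2 * r * Bc) * ?X^(KK + KK + 3) * (?cf * ?cf) \<le> (Bd + Bc + 2 * r * Bc) * ?X^(KK + KK + 3) * (?cv * ?cf + ?cf * ?cf)"
    using BcBd(3,4) r0 by (intro mult_left_mono) (auto simp: X_nonneg)
  have "\<bar>Dj j \<omega>\<bar> = \<bar>fst (snd \<omega>) $ j\<bar> * \<bar>W \<omega> * dN2 j \<omega> + dW j \<omega> * N2 \<omega>\<bar>"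
    unfolding Dj_def abs_mult ..
  also have "\<dots> \<le> ?X * ((3 * Bc + Bd + 2 * r * Bc) * ?X^(KK + KK + 3) * (?cv * ?cf + ?cf * ?cf))"
  proof (rule mm)
    have "\<bar>W \<omega> * dN2 j \<omega> + dW j \<omega> * N2 \<omega>\<bar> \<le> 2 * Bc * ?X^(KK + KK + 3) * (?cv * ?cf + ?cf * ?cf) + (Bd + Bc + 2 * r * Bc) * ?X^(KK + KK + 3) * (?cv * ?cf + ?cf * ?cf)"
      using p1 p2 q1 q2 by linarith
    then show "\<bar>W \<omega> * dN2 j \<omega> + dW j \<omega> * N2 \<omega>\<bar> \<le> (3 * Bc + Bd + 2 * r * Bc) * ?X^(KK + KK + 3) * (?cv * ?cf + ?cf * ?cf)"
      by (simp add: algebra_simps)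
  qed (auto intro: cX)
  also have "\<dots> = (3 * Bc + Bd + 2 * r * Bc) * (?X^(KK + KK + 4) * nn j \<omega>)"
  proof -
    have "KK + KK + 4 = Suc (KK + KK + 3)" by simp
    then show ?thesis unfolding nn_def by (simp only: pw4)
  qed
  finally show ?thesis .
qed

lemma gj_bnd: "\<bar>gj j \<omega>\<bar> \<le> Bc * ((1 + (norm \<omega>)\<^sup>2)^(KK + KK + 3) * (cmod (fhat f \<omega>) * cmod (fhat f \<omega>)))"
proof -
  have "\<bar>gj j \<omega>\<bar> = \<bar>fst (snd \<omega>) $ j\<bar> * (\<bar>W \<omega>\<bar> * (cmod (fhat f \<omega>) * cmod (fhat f \<omega>)))"
    unfolding gj_def N2_def abs_mult by (simp add: power2_eq_square)
  also have "\<dots> \<le> (1 + (norm \<omega>)\<^sup>2) * ((Bc * (1 + (norm \<omega>)\<^sup>2)^(KK + KK + 2)) * (cmod (fhat f \<omega>) * cmod (fhat f \<omega>)))"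
    by (intro mm cX W_bnd order_refl) auto
  also have "\<dots> = Bc * ((1 + (norm \<omega>)\<^sup>2)^(KK + KK + 3) * (cmod (fhat f \<omega>) * cmod (fhat f \<omega>)))"
    by (rule pw3)
  finally show ?thesis .
qed

lemma Dj_meas: "Dj j \<in> borel_measurable lborel"
  unfolding Dj_def W_def J_def dW_def dN2_def N2_def measurable_lborel2 by measurable

lemma gj_meas: "gj j \<in> borel_measurable lborel"
  unfolding gj_def W_def J_def N2_def measurable_lborel2 by measurable

lemma Dj_int: "integrable lborel (Dj j)"
  by (rule integrable_decr[OF Dj_meas nn_decr, of _ "3 * Bc + Bd + 2 * r * Bc" "KK + KK + 4"])
     (use Dj_bnd BcBd r0 in auto)

lemma gj_int: "integrable lborel (gj j)"
  by (rule integrable_decr[OF gj_meas decr_mult[OF decr_fhat decr_fhat], of _ Bc "KK + KK + 3"])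
     (use gj_bnd BcBd in auto)

lemma Dj_zero: "integral\<^sup>L lborel (Dj j) = 0"
proof -
  define M where "M = DIM('d pt) + 2"
  obtain C where C: "\<And>\<omega>::'d pt. (1 + (norm \<omega>)\<^sup>2)^(KK + KK + 4) * nn j \<omega> \<le> C * inverse ((1 + (norm \<omega>)\<^sup>2)^M)"
    using decr_bound[OF nn_decr] by blast
  define A where "A = 3 * Bc + Bd + 2 * r * Bc"
  have A0: "0 \<le> A" unfolding A_def using BcBd r0 by auto
  have DB: "\<bar>Dj j \<omega>\<bar> \<le> A * C * inverse ((1 + (norm \<omega>)\<^sup>2)^M)" for \<omega>
  proof -
    have "\<bar>Dj j \<omega>\<bar> \<le> A * ((1 + (norm \<omega>)\<^sup>2)^(KK + KK + 4) * nn j \<omega>)" unfolding A_def by (rule Dj_bnd)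
    also have "\<dots> \<le> A * (C * inverse ((1 + (norm \<omega>)\<^sup>2)^M))" by (rule mult_left_mono[OF C A0])
    finally show ?thesis by (simp only: mult_ac)
  qed
  have C0: "0 \<le> C" using C[of 0] nn_nonneg[of j 0] by (simp add: M_def)
  show ?thesis
  proof (rule IBP0[OF gj_int Dj_meas _ der_gj])
    show "integrable lborel (\<lambda>\<omega>::'d pt. A * C * 3^M * inverse ((1 + (norm \<omega>)\<^sup>2)^M))"
      unfolding M_def by (intro integrable_mult_right integrable_decay_basic) simp
    fix x :: "'d pt" and s :: real assume s: "\<bar>s\<bar> \<le> 1"
    have "norm (Dj j (x + s *\<^sub>R Ej j)) \<le> A * C * inverse ((1 + (norm (x + s *\<^sub>R Ej j))\<^sup>2)^M)"
      using DB by simp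
    also have "\<dots> \<le> A * C * (3^M * inverse ((1 + (norm x)\<^sup>2)^M))"
      using A0 C0 by (intro mult_left_mono shift_decay s norm_Ej) auto
    finally show "norm (Dj j (x + s *\<^sub>R Ej j)) \<le> A * C * 3^M * inverse ((1 + (norm x)\<^sup>2)^M)"
      by (simp add: mult_ac)
  qed
qed

end


lemma key_ineq:
  fixes chi a b2 r xg xe nx ng ne jb c2 :: real
  assumes "chi \<ge> 0" "a \<ge> 0" "b2 \<ge> 0" "r \<ge> 0" "\<bar>xg\<bar> \<le> nx * ng" "\<bar>xe\<bar> \<le> nx * ne" "ne \<le> jb"
    "nx \<ge> 0" "ng \<ge> 0" "ne \<ge> 0" "c2 = b2 * (1 + ne\<^sup>2)"
  shows "chi * nx\<^sup>2 * a * b2 * (1 + (1 - 2 * r) * ne\<^sup>2)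
     \<le> xg * xe * (a * c2) + chi * nx\<^sup>2 * (a * c2) + chi * xe * (a * ((- 2 * r) * xe * b2)) + ng * (a * (1 + nx\<^sup>2)) * (jb * c2)"
proof -
  have q0: "0 \<le> chi * a * b2" using assms by simp
  have xe2: "xe * xe \<le> (nx * ne) * (nx * ne)"
  proof -
    have "\<bar>xe\<bar> * \<bar>xe\<bar> \<le> (nx * ne) * (nx * ne)" using assms(6) by (intro mult_mono) auto
    then show ?thesis by (simp add: abs_mult_self_eq)
  qed
  have i1: "chi * a * b2 * (2 * r) * (xe * xe) \<le> chi * a * b2 * (2 * r) * ((nx * ne) * (nx * ne))"
    using q0 assms(4) xe2 by (intro mult_left_mono) auto
  have c2n: "0 \<le> c2" using assms by simp
  have i2: "\<bar>xg * xe * (a * c2)\<bar> \<le> (nx * ng) * (nx * ne) * (a * c2)"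
    unfolding abs_mult using assms c2n by (intro mult_mono) auto
  have i3: "(nx * ng) * (nx * ne) * (a * c2) \<le> ng * (a * (1 + nx\<^sup>2)) * (jb * c2)"
  proof -
    have "nx * nx \<le> 1 + nx\<^sup>2" by (simp add: power2_eq_square)
    then have "(nx * ng) * (nx * ne) * (a * c2) = (nx * nx) * ne * (ng * a * c2)" by (simp add: mult_ac)
    also have "\<dots> \<le> (1 + nx\<^sup>2) * jb * (ng * a * c2)"
      using assms c2n \<open>nx * nx \<le> 1 + nx\<^sup>2\<close> by (intro mult_mono mult_nonneg_nonneg) auto
    also have "\<dots> = ng * (a * (1 + nx\<^sup>2)) * (jb * c2)" by (simp add: mult_ac)
    finally show ?thesis .
  qed
  have e1: "chi * nx\<^sup>2 * (a * c2) + chi * xe * (a * ((- 2 * r) * xe * b2))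
      = chi * a * b2 * (nx\<^sup>2 * (1 + ne\<^sup>2)) - chi * a * b2 * (2 * r) * (xe * xe)"
    using assms(11) by (simp add: algebra_simps)
  have e2: "chi * nx\<^sup>2 * a * b2 * (1 + (1 - 2 * r) * ne\<^sup>2)
      = chi * a * b2 * (nx\<^sup>2 * (1 + ne\<^sup>2)) - chi * a * b2 * (2 * r) * ((nx * ne) * (nx * ne))"
    by (simp add: algebra_simps power2_eq_square)
  show ?thesis using e1 e2 i1 i2 i3 by linarith
qed

lemma sum3: "(\<Sum>j\<in>S. x j * (g j * p * J + c * x j * J + c * p * (A * (k * y j * B))))
   = (\<Sum>j\<in>S. x j * g j) * p * J + c * (\<Sum>j\<in>S. x j * x j) * J + c * p * (A * (k * (\<Sum>j\<in>S. x j * y j) * B))"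
  for x g y :: "'a \<Rightarrow> real"
  by (simp add: sum.distrib distrib_left sum_distrib_left sum_distrib_right mult_ac)

context part1
begin

definition P where "P \<omega> = (\<Sum>j\<in>UNIV. fst (snd \<omega>) $ j * dW j \<omega>)"

lemma P_eq: "P \<omega> = (fst (snd \<omega>) \<bullet> grad_eta chi \<omega>) * (fst (snd \<omega>) \<bullet> snd (snd \<omega>)) * J \<omega>
   + chi \<omega> * (fst (snd \<omega>) \<bullet> fst (snd \<omega>)) * J \<omega>
   + chi \<omega> * (fst (snd \<omega>) \<bullet> snd (snd \<omega>)) * (jbr (fst (snd \<omega>)) powr (2 * s - 2) * ((- 2 * r) * (fst (snd \<omega>) \<bullet> snd (snd \<omega>)) * jbr (snd (snd \<omega>)) powr (- 2 * r - 2)))"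
proof -
  let ?x = "fst (snd \<omega>)" and ?y = "snd (snd \<omega>)"
  have a: "?x \<bullet> grad_eta chi \<omega> = (\<Sum>j\<in>UNIV. ?x $ j * deta chi j \<omega>)" unfolding inner_vec_def grad_eta_def by simp
  have b: "?x \<bullet> ?x = (\<Sum>j\<in>UNIV. ?x $ j * ?x $ j)" unfolding inner_vec_def by simp
  have c: "?x \<bullet> ?y = (\<Sum>j\<in>UNIV. ?x $ j * ?y $ j)" unfolding inner_vec_def by simp
  show ?thesis
    unfolding P_def dW_def a b
    by (subst sum3) (simp add: c)
qed


definition L1 where "L1 \<omega> = chi \<omega> * (norm (fst (snd \<omega>)))\<^sup>2 * jbr (fst (snd \<omega>)) powr (2 * s - 2) * jbr (snd (snd \<omega>)) powr (- 2 - 2 * r)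
        * (1 + (1 - 2 * r) * (norm (snd (snd \<omega>)))\<^sup>2) * (cmod (fhat f \<omega>))\<^sup>2"
definition R1 where "R1 \<omega> = norm (grad_eta chi \<omega>) * jbr (fst (snd \<omega>)) powr (2 * s) * jbr (snd (snd \<omega>)) powr (1 - 2 * r) * (cmod (fhat f \<omega>))\<^sup>2"

lemma jbr_powr_shift: "jbr x powr (c + 2) = jbr x powr c * (1 + (norm x)\<^sup>2)"
proof -
  have "jbr x powr (c + 2) = jbr x powr c * jbr x powr 2" by (simp add: powr_add)
  also have "jbr x powr 2 = (jbr x)\<^sup>2" using jbr_pos[of x] by (simp add: powr_numeral)
  finally show ?thesis by (simp add: jbr_sq)
qed

lemma L1_le: "L1 \<omega> \<le> P \<omega> * N2 \<omega> + R1 \<omega>"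
proof -
  let ?x = "fst (snd \<omega>)" and ?y = "snd (snd \<omega>)" and ?g = "grad_eta chi \<omega>"
  define a where "a = jbr ?x powr (2 * s - 2)"
  define b2 where "b2 = jbr ?y powr (- 2 * r - 2)"
  define c2 where "c2 = jbr ?y powr (- 2 * r)"
  have c2e: "c2 = b2 * (1 + (norm ?y)\<^sup>2)"
    unfolding c2_def b2_def using jbr_powr_shift[of ?y "- 2 * r - 2"] by simp
  have aE: "jbr ?x powr (2 * s) = a * (1 + (norm ?x)\<^sup>2)"
    unfolding a_def using jbr_powr_shift[of ?x "2 * s - 2"] by simp
  have jE: "jbr ?y powr (1 - 2 * r) = jbr ?y * c2"
  proof -
    have "jbr ?y powr (1 + (- 2 * r)) = jbr ?y powr 1 * jbr ?y powr (- 2 * r)" by (rule powr_add)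
    then show ?thesis unfolding c2_def using jbr_pos[of ?y] by simp
  qed
  have ne: "norm ?y \<le> jbr ?y" unfolding jbr_def by (simp add: real_le_rsqrt)
  have key: "chi \<omega> * (norm ?x)\<^sup>2 * a * b2 * (1 + (1 - 2 * r) * (norm ?y)\<^sup>2)
     \<le> (?x \<bullet> ?g) * (?x \<bullet> ?y) * (a * c2) + chi \<omega> * (norm ?x)\<^sup>2 * (a * c2)
       + chi \<omega> * (?x \<bullet> ?y) * (a * ((- 2 * r) * (?x \<bullet> ?y) * b2)) + norm ?g * (a * (1 + (norm ?x)\<^sup>2)) * (jbr ?y * c2)"
    by (rule key_ineq) (auto simp: chi0 r0 a_def b2_def Cauchy_Schwarz_ineq2 ne c2e)
  have N0: "0 \<le> N2 \<omega>" unfolding N2_def by simp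
  have "L1 \<omega> = (chi \<omega> * (norm ?x)\<^sup>2 * a * b2 * (1 + (1 - 2 * r) * (norm ?y)\<^sup>2)) * N2 \<omega>"
  proof -
    have e: "- 2 - 2 * r = - 2 * r - 2" by simp
    show ?thesis unfolding L1_def N2_def a_def b2_def e by (simp only: mult_ac)
  qed
  also have "\<dots> \<le> ((?x \<bullet> ?g) * (?x \<bullet> ?y) * (a * c2) + chi \<omega> * (norm ?x)\<^sup>2 * (a * c2)
       + chi \<omega> * (?x \<bullet> ?y) * (a * ((- 2 * r) * (?x \<bullet> ?y) * b2)) + norm ?g * (a * (1 + (norm ?x)\<^sup>2)) * (jbr ?y * c2)) * N2 \<omega>"
    by (rule mult_right_mono[OF key N0])
  also have "\<dots> = P \<omega> * N2 \<omega> + R1 \<omega>"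
  proof -
    have PE: "P \<omega> = (?x \<bullet> ?g) * (?x \<bullet> ?y) * (a * c2) + chi \<omega> * (norm ?x)\<^sup>2 * (a * c2)
       + chi \<omega> * (?x \<bullet> ?y) * (a * ((- 2 * r) * (?x \<bullet> ?y) * b2))"
      unfolding P_eq J_def a_def c2_def b2_def by (simp add: power2_norm_eq_inner)
    have RE: "R1 \<omega> = norm ?g * (a * (1 + (norm ?x)\<^sup>2)) * (jbr ?y * c2) * N2 \<omega>"
      unfolding R1_def N2_def aE jE ..
    show ?thesis unfolding PE RE by (simp add: algebra_simps)
  qed
  finally show ?thesis .
qed

end


context part1
begin

lemma sumDj:
  fixes u :: "real \<times> (real^'d) \<Rightarrow> real^'d"
  shows "(\<Sum>j\<in>UNIV. Dj j \<omega>) = P \<omega> * N2 \<omega>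
    - 2 * Re (of_real (W \<omega>) * Xop u f \<omega> * cnj (fhat f \<omega>))
    - 2 * Im (of_real (W \<omega>) * (\<Sum>j\<in>UNIV. of_real (fst (snd \<omega>) $ j) * uconv u f j \<omega>) * cnj (fhat f \<omega>))"
proof -
  define a where "a = fhat f \<omega>"
  define V where "V = (\<Sum>j\<in>UNIV. of_real (fst (snd \<omega>) $ j) * vfhat f j \<omega>)"
  define U where "U = (\<Sum>j\<in>UNIV. of_real (fst (snd \<omega>) $ j) * uconv u f j \<omega>)"
  have s1: "(\<Sum>j\<in>UNIV. Dj j \<omega>) = W \<omega> * (\<Sum>j\<in>UNIV. fst (snd \<omega>) $ j * dN2 j \<omega>) + P \<omega> * N2 \<omega>"
    unfolding Dj_def P_def by (simp add: sum.distrib sum_distrib_left sum_distrib_right algebra_simps)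
  have d: "dN2 j \<omega> = 2 * Im (vfhat f j \<omega> * cnj a)" for j
    unfolding dN2_def a_def by simp
  have s2: "(\<Sum>j\<in>UNIV. fst (snd \<omega>) $ j * dN2 j \<omega>) = 2 * Im (V * cnj a)"
  proof -
    have Va: "V * cnj a = (\<Sum>j\<in>UNIV. of_real (fst (snd \<omega>) $ j) * (vfhat f j \<omega> * cnj a))"
      unfolding V_def by (simp add: sum_distrib_right sum_distrib_left mult_ac)
    then have imf: "Im (V * cnj a) = (\<Sum>j\<in>UNIV. fst (snd \<omega>) $ j * Im (vfhat f j \<omega> * cnj a))"
    proof -
      have imr: "\<And>x z. Im (complex_of_real x * z) = x * Im z" by simp
      show ?thesis using Va by (simp only: Im_sum imr)
    qed
    have e1: "(\<Sum>j\<in>UNIV. fst (snd \<omega>) $ j * dN2 j \<omega>) = (\<Sum>j\<in>UNIV. 2 * (fst (snd \<omega>) $ j * Im (vfhat f j \<omega> * cnj a)))"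
      unfolding d by (simp only: mult_ac)
    show ?thesis unfolding e1 imf by (simp only: sum_distrib_left)
  qed
  have aa: "Im (a * cnj a) = 0" by simp
  have s3: "Re (of_real (W \<omega>) * Xop u f \<omega> * cnj a) = - W \<omega> * (Im (V * cnj a) + Im (U * cnj a))"
  proof -
    have eqn: "of_real (W \<omega>) * Xop u f \<omega> * cnj a = of_real (W \<omega>) * (\<i> * (of_real (fst \<omega>) * (a * cnj a) + V * cnj a + U * cnj a))"
      unfolding Xop_eq V_def[symmetric] U_def[symmetric] a_def by (simp add: algebra_simps)
    show ?thesis unfolding eqn by (simp add: algebra_simps)
  qed
  have s4: "Im (of_real (W \<omega>) * U * cnj a) = W \<omega> * Im (U * cnj a)"
    by (simp add: mult.assoc)
  show ?thesis
    unfolding s1 s2 a_def[symmetric] V_def[symmetric] U_def[symmetric] using s3 s4 by (simp add: algebra_simps)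
qed

end


context part1
begin

lemma L1_int: "integrable lborel L1"
proof -
  define S where "S = \<bar>2 * s - 2\<bar> + \<bar>2 * r\<bar> + \<bar>2 * s\<bar> + \<bar>1 - 2 * r\<bar> + 2"
  show ?thesis
  proof (rule integrable_decr[OF _ decr_mult[OF decr_fhat decr_fhat norm_ge_zero norm_ge_zero], of _ "Bc * (1 + \<bar>1 - 2 * r\<bar>)" "KK + KK + 2"])
    show "L1 \<in> borel_measurable lborel" unfolding L1_def measurable_lborel2 by measurable
    show "0 \<le> Bc * (1 + \<bar>1 - 2 * r\<bar>)" using BcBd by simp
    fix \<omega> :: "'d pt"
    let ?X = "1 + (norm \<omega>)\<^sup>2"
    have x2: "(norm (fst (snd \<omega>)))\<^sup>2 \<le> ?X"
    proof -
      have "(norm (fst (snd \<omega>)))\<^sup>2 \<le> (norm \<omega>)\<^sup>2" using comps(2)[of \<omega>] by (intro power_mono) auto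
      then show ?thesis by linarith
    qed
    have y2: "\<bar>1 + (1 - 2 * r) * (norm (snd (snd \<omega>)))\<^sup>2\<bar> \<le> (1 + \<bar>1 - 2 * r\<bar>) * ?X"
    proof -
      have "(norm (snd (snd \<omega>)))\<^sup>2 \<le> (norm \<omega>)\<^sup>2" using comps(3)[of \<omega>] by (intro power_mono) auto
      then have "(norm (snd (snd \<omega>)))\<^sup>2 \<le> ?X" by linarith
      then have "\<bar>1 - 2 * r\<bar> * (norm (snd (snd \<omega>)))\<^sup>2 \<le> \<bar>1 - 2 * r\<bar> * ?X" by (rule mult_left_mono) simp
      moreover have "\<bar>1 + (1 - 2 * r) * (norm (snd (snd \<omega>)))\<^sup>2\<bar> \<le> 1 + \<bar>1 - 2 * r\<bar> * (norm (snd (snd \<omega>)))\<^sup>2"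
        by (rule order_trans[OF abs_triangle_ineq]) (simp add: abs_mult)
      moreover have "1 + \<bar>1 - 2 * r\<bar> * ?X \<le> (1 + \<bar>1 - 2 * r\<bar>) * ?X" by (simp add: algebra_simps)
      ultimately show ?thesis by linarith
    qed
    have ab: "0 \<le> \<bar>2 * r\<bar>" "0 \<le> \<bar>2 * s\<bar>" "0 \<le> \<bar>1 - 2 * r\<bar>" "0 \<le> \<bar>2 * s - 2\<bar>" by simp_all
    have ja: "jbr (fst (snd \<omega>)) powr (2 * s - 2) \<le> ?X^KK"
      by (rule jbK[OF _ comps(2)]) (simp add: add_nonneg_nonneg)
    have jb: "jbr (snd (snd \<omega>)) powr (- 2 - 2 * r) \<le> ?X^KK"
    proof (rule jbK[OF _ comps(3)])
      have "\<bar>- 2 - 2 * r\<bar> = 2 * r + 2" using r0 by simp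
      also have "\<dots> \<le> \<bar>2 * r\<bar> + 2" by simp
      also have "\<dots> \<le> \<bar>2 * s - 2\<bar> + \<bar>2 * r\<bar> + \<bar>2 * s\<bar> + \<bar>1 - 2 * r\<bar> + 2" by (simp add: add_nonneg_nonneg)
      finally show "\<bar>- 2 - 2 * r\<bar> \<le> \<bar>2 * s - 2\<bar> + \<bar>2 * r\<bar> + \<bar>2 * s\<bar> + \<bar>1 - 2 * r\<bar> + 2" .
    qed
    have "norm (L1 \<omega>) = \<bar>chi \<omega>\<bar> * (norm (fst (snd \<omega>)))\<^sup>2 * jbr (fst (snd \<omega>)) powr (2 * s - 2) * jbr (snd (snd \<omega>)) powr (- 2 - 2 * r)
        * \<bar>1 + (1 - 2 * r) * (norm (snd (snd \<omega>)))\<^sup>2\<bar> * (cmod (fhat f \<omega>) * cmod (fhat f \<omega>))"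
      unfolding L1_def by (simp add: abs_mult power2_eq_square)
    also have "\<dots> \<le> Bc * ?X * ?X^KK * ?X^KK * ((1 + \<bar>1 - 2 * r\<bar>) * ?X) * (cmod (fhat f \<omega>) * cmod (fhat f \<omega>))"
      by (intro mm BcBd x2 y2 ja jb order_refl) auto
    also have "\<dots> = Bc * (1 + \<bar>1 - 2 * r\<bar>) * (?X^(KK + KK + 2) * (cmod (fhat f \<omega>) * cmod (fhat f \<omega>)))"
      by (simp only: power_add power2_eq_square mult_ac)
    finally show "norm (L1 \<omega>) \<le> Bc * (1 + \<bar>1 - 2 * r\<bar>) * (?X^(KK + KK + 2) * (cmod (fhat f \<omega>) * cmod (fhat f \<omega>)))" .
  qed
qed


lemma R1_int: "integrable lborel R1"
proof -
  obtain Bg where Bg: "\<And>p. norm (grad_eta chi p) \<le> Bg" using grad_bnd by blast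
  have Bg0: "0 \<le> Bg" using Bg[of 0] norm_ge_zero[of "grad_eta chi 0"] by linarith
  show ?thesis
  proof (rule integrable_decr[OF _ decr_mult[OF decr_fhat decr_fhat norm_ge_zero norm_ge_zero], of _ Bg "KK + KK"])
    show "R1 \<in> borel_measurable lborel" unfolding R1_def measurable_lborel2 by measurable
    show "0 \<le> Bg" by (rule Bg0)
    fix \<omega> :: "'d pt"
    let ?X = "1 + (norm \<omega>)\<^sup>2"
    have ja: "jbr (fst (snd \<omega>)) powr (2 * s) \<le> ?X^KK"
      by (rule jbK[OF _ comps(2)]) (simp add: add_nonneg_nonneg)
    have jb: "jbr (snd (snd \<omega>)) powr (1 - 2 * r) \<le> ?X^KK"
      by (rule jbK[OF _ comps(3)]) (simp add: add_nonneg_nonneg)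
    have "norm (R1 \<omega>) = norm (grad_eta chi \<omega>) * jbr (fst (snd \<omega>)) powr (2 * s) * jbr (snd (snd \<omega>)) powr (1 - 2 * r) * (cmod (fhat f \<omega>) * cmod (fhat f \<omega>))"
      unfolding R1_def by (simp add: abs_mult power2_eq_square)
    also have "\<dots> \<le> Bg * ?X^KK * ?X^KK * (cmod (fhat f \<omega>) * cmod (fhat f \<omega>))"
      by (intro mm Bg ja jb order_refl) auto
    also have "\<dots> = Bg * (?X^(KK + KK) * (cmod (fhat f \<omega>) * cmod (fhat f \<omega>)))"
      by (simp only: power_add mult_ac)
    finally show "norm (R1 \<omega>) \<le> Bg * (?X^(KK + KK) * (cmod (fhat f \<omega>) * cmod (fhat f \<omega>)))" .
  qed
qed

lemma T1_int: "integrable lborel (\<lambda>\<omega>. W \<omega> * fst \<omega> * N2 \<omega>)"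
proof (rule integrable_decr[OF _ decr_mult[OF decr_fhat decr_fhat norm_ge_zero norm_ge_zero], of _ Bc "KK + KK + 3"])
  show "(\<lambda>\<omega>. W \<omega> * fst \<omega> * N2 \<omega>) \<in> borel_measurable lborel"
    unfolding W_def J_def N2_def measurable_lborel2 by measurable
  show "0 \<le> Bc" by (rule BcBd)
  fix \<omega> :: "'d pt"
  let ?X = "1 + (norm \<omega>)\<^sup>2"
  have "norm (W \<omega> * fst \<omega> * N2 \<omega>) = \<bar>fst \<omega>\<bar> * (\<bar>W \<omega>\<bar> * (cmod (fhat f \<omega>) * cmod (fhat f \<omega>)))"
    unfolding N2_def by (simp add: abs_mult power2_eq_square mult_ac)
  also have "\<dots> \<le> ?X * ((Bc * ?X^(KK + KK + 2)) * (cmod (fhat f \<omega>) * cmod (fhat f \<omega>)))"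
    by (intro mm cX W_bnd order_refl) auto
  also have "\<dots> = Bc * (?X^(KK + KK + 3) * (cmod (fhat f \<omega>) * cmod (fhat f \<omega>)))" by (rule pw3)
  finally show "norm (W \<omega> * fst \<omega> * N2 \<omega>) \<le> Bc * (?X^(KK + KK + 3) * (cmod (fhat f \<omega>) * cmod (fhat f \<omega>)))" .
qed

lemma T2_int: "integrable lborel (\<lambda>\<omega>. of_real (W \<omega>) * (\<Sum>j\<in>UNIV. of_real (fst (snd \<omega>) $ j) * vfhat f j \<omega>) * cnj (fhat f \<omega>))"
proof (rule integrable_decr[where n="\<lambda>\<omega>. (\<Sum>j\<in>UNIV. cmod (vfhat f j \<omega>)) * cmod (fhat f \<omega>)" and A=Bc and K="KK + KK + 3"])
  show "(\<lambda>\<omega>. of_real (W \<omega>) * (\<Sum>j\<in>UNIV. of_real (fst (snd \<omega>) $ j) * vfhat f j \<omega>) * cnj (fhat f \<omega>)) \<in> borel_measurable lborel"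
    unfolding W_def J_def measurable_lborel2 by measurable
  show "decr (\<lambda>\<omega>. (\<Sum>j\<in>UNIV. cmod (vfhat f j \<omega>)) * cmod (fhat f \<omega>))"
    by (intro decr_mult decr_fhat decr_sum decr_vfhat sum_nonneg) auto
  show "0 \<le> Bc" by (rule BcBd)
  fix \<omega> :: "'d pt"
  let ?X = "1 + (norm \<omega>)\<^sup>2"
  let ?V = "(\<Sum>j\<in>UNIV. of_real (fst (snd \<omega>) $ j) * vfhat f j \<omega>)"
  have nV: "norm ?V \<le> ?X * (\<Sum>j\<in>UNIV. cmod (vfhat f j \<omega>))"
  proof -
    have "norm ?V \<le> (\<Sum>j\<in>UNIV. norm (of_real (fst (snd \<omega>) $ j) * vfhat f j \<omega>))" by (rule norm_sum)
    also have "\<dots> \<le> (\<Sum>j\<in>UNIV. ?X * cmod (vfhat f j \<omega>))"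
      by (intro sum_mono) (auto simp: norm_mult intro!: mult_right_mono cX)
    finally show ?thesis by (simp add: sum_distrib_left)
  qed
  have "norm (of_real (W \<omega>) * ?V * cnj (fhat f \<omega>)) = \<bar>W \<omega>\<bar> * norm ?V * cmod (fhat f \<omega>)"
    by (simp add: norm_mult)
  also have "\<dots> \<le> (Bc * ?X^(KK + KK + 2)) * (?X * (\<Sum>j\<in>UNIV. cmod (vfhat f j \<omega>))) * cmod (fhat f \<omega>)"
    by (intro mm W_bnd nV order_refl) auto
  also have "\<dots> = Bc * (?X^(KK + KK + 3) * ((\<Sum>j\<in>UNIV. cmod (vfhat f j \<omega>)) * cmod (fhat f \<omega>)))"
    by (simp only: power_add power2_eq_square power3_eq_cube mult_ac)
  finally show "norm (of_real (W \<omega>) * ?V * cnj (fhat f \<omega>)) \<le> Bc * (?X^(KK + KK + 3) * ((\<Sum>j\<in>UNIV. cmod (vfhat f j \<omega>)) * cmod (fhat f \<omega>)))" .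
qed

end


context part1
begin

lemma part1_main:
  fixes u :: "real \<times> (real^'d) \<Rightarrow> real^'d"
  assumes int1: "integrable lborel (\<lambda>(\<tau>, \<xi>, \<eta>).
       complex_of_real (chi (\<tau>, \<xi>, \<eta>) * (\<xi> \<bullet> \<eta>) * jbr \<xi> powr (2 * s - 2) * jbr \<eta> powr (- 2 * r))
       * (\<Sum>j\<in>UNIV. of_real (\<xi> $ j) * uconv u f j (\<tau>, \<xi>, \<eta>)) * cnj (fhat f (\<tau>, \<xi>, \<eta>)))"
  shows "(LINT \<omega>|lborel. (case \<omega> of (\<tau>, \<xi>, \<eta>) \<Rightarrow>
        chi \<omega> * (norm \<xi>)\<^sup>2 * jbr \<xi> powr (2 * s - 2) * jbr \<eta> powr (- 2 - 2 * r)
        * (1 + (1 - 2 * r) * (norm \<eta>)\<^sup>2) * (cmod (fhat f \<omega>))\<^sup>2))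
    \<le> (LINT \<omega>|lborel. (case \<omega> of (\<tau>, \<xi>, \<eta>) \<Rightarrow>
        norm (grad_eta chi \<omega>) * jbr \<xi> powr (2 * s) * jbr \<eta> powr (1 - 2 * r) * (cmod (fhat f \<omega>))\<^sup>2))
      + 2 * cmod (LINT \<omega>|lborel. (case \<omega> of (\<tau>, \<xi>, \<eta>) \<Rightarrow>
        complex_of_real (chi \<omega> * (\<xi> \<bullet> \<eta>) * jbr \<xi> powr (2 * s - 2) * jbr \<eta> powr (- 2 * r))
        * Xop u f \<omega> * cnj (fhat f \<omega>)))
      + 2 * Im (LINT \<omega>|lborel. (case \<omega> of (\<tau>, \<xi>, \<eta>) \<Rightarrow>
        complex_of_real (chi \<omega> * (\<xi> \<bullet> \<eta>) * jbr \<xi> powr (2 * s - 2) * jbr \<eta> powr (- 2 * r))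
        * (\<Sum>j\<in>UNIV. of_real (\<xi> $ j) * uconv u f j \<omega>) * cnj (fhat f \<omega>)))"
proof -
  define A1 where "A1 \<omega> = of_real (W \<omega>) * Xop u f \<omega> * cnj (fhat f \<omega>)" for \<omega>
  define B1 where "B1 \<omega> = of_real (W \<omega>) * (\<Sum>j\<in>UNIV. of_real (fst (snd \<omega>) $ j) * uconv u f j \<omega>) * cnj (fhat f \<omega>)" for \<omega>
  define T2 where "T2 \<omega> = of_real (W \<omega>) * (\<Sum>j\<in>UNIV. of_real (fst (snd \<omega>) $ j) * vfhat f j \<omega>) * cnj (fhat f \<omega>)" for \<omega>
  have eL: "(\<lambda>\<omega>. case \<omega> of (\<tau>, \<xi>, \<eta>) \<Rightarrow>
        chi \<omega> * (norm \<xi>)\<^sup>2 * jbr \<xi> powr (2 * s - 2) * jbr \<eta> powr (- 2 - 2 * r)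
        * (1 + (1 - 2 * r) * (norm \<eta>)\<^sup>2) * (cmod (fhat f \<omega>))\<^sup>2) = L1"
    by (auto simp: fun_eq_iff L1_def split: prod.splits)
  have eR: "(\<lambda>\<omega>. case \<omega> of (\<tau>, \<xi>, \<eta>) \<Rightarrow>
        norm (grad_eta chi \<omega>) * jbr \<xi> powr (2 * s) * jbr \<eta> powr (1 - 2 * r) * (cmod (fhat f \<omega>))\<^sup>2) = R1"
    by (auto simp: fun_eq_iff R1_def split: prod.splits)
  have eA: "(\<lambda>\<omega>. case \<omega> of (\<tau>, \<xi>, \<eta>) \<Rightarrow>
        complex_of_real (chi \<omega> * (\<xi> \<bullet> \<eta>) * jbr \<xi> powr (2 * s - 2) * jbr \<eta> powr (- 2 * r))
        * Xop u f \<omega> * cnj (fhat f \<omega>)) = A1"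
    by (auto simp: fun_eq_iff A1_def W_def J_def mult.assoc split: prod.splits)
  have eB: "(\<lambda>\<omega>. case \<omega> of (\<tau>, \<xi>, \<eta>) \<Rightarrow>
        complex_of_real (chi \<omega> * (\<xi> \<bullet> \<eta>) * jbr \<xi> powr (2 * s - 2) * jbr \<eta> powr (- 2 * r))
        * (\<Sum>j\<in>UNIV. of_real (\<xi> $ j) * uconv u f j \<omega>) * cnj (fhat f \<omega>)) = B1"
    by (auto simp: fun_eq_iff B1_def W_def J_def mult.assoc split: prod.splits)
  have eB': "(\<lambda>(\<tau>, \<xi>, \<eta>).
       complex_of_real (chi (\<tau>, \<xi>, \<eta>) * (\<xi> \<bullet> \<eta>) * jbr \<xi> powr (2 * s - 2) * jbr \<eta> powr (- 2 * r))
       * (\<Sum>j\<in>UNIV. of_real (\<xi> $ j) * uconv u f j (\<tau>, \<xi>, \<eta>)) * cnj (fhat f (\<tau>, \<xi>, \<eta>))) = B1"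
    by (auto simp: fun_eq_iff B1_def W_def J_def mult.assoc split: prod.splits)
  have iB1: "integrable lborel B1" using int1 unfolding eB' .
  have Aeq: "A1 = (\<lambda>\<omega>. \<i> * (of_real (W \<omega> * fst \<omega> * N2 \<omega>) + T2 \<omega> + B1 \<omega>))"
  proof
    fix \<omega>
    have "fhat f \<omega> * cnj (fhat f \<omega>) = of_real (N2 \<omega>)" unfolding N2_def by (metis complex_norm_square)
    then show "A1 \<omega> = \<i> * (of_real (W \<omega> * fst \<omega> * N2 \<omega>) + T2 \<omega> + B1 \<omega>)"
      unfolding A1_def T2_def B1_def Xop_eq by (simp add: algebra_simps)
  qed
  have iA1: "integrable lborel A1"
  proof -
    have T1c: "integrable lborel (\<lambda>\<omega>. complex_of_real (W \<omega> * fst \<omega> * N2 \<omega>))"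
      by (rule integrable_of_real[OF T1_int])
    have T2c: "integrable lborel T2" using T2_int unfolding T2_def .
    have "integrable lborel (\<lambda>x. complex_of_real (W x * fst x * N2 x) + T2 x + B1 x)"
      by (rule Bochner_Integration.integrable_add[OF Bochner_Integration.integrable_add[OF T1c T2c] iB1])
    then show ?thesis unfolding Aeq by (rule Bochner_Integration.integrable_mult_right)
  qed
  have iSD: "integrable lborel (\<lambda>\<omega>. \<Sum>j\<in>UNIV. Dj j \<omega>)"
    by (rule Bochner_Integration.integrable_sum) (rule Dj_int)
  have PNe: "(\<lambda>\<omega>. P \<omega> * N2 \<omega>) = (\<lambda>\<omega>. (\<Sum>j\<in>UNIV. Dj j \<omega>) + 2 * Re (A1 \<omega>) + 2 * Im (B1 \<omega>))"
    using sumDj[of _ u] unfolding A1_def B1_def by (auto simp: fun_eq_iff)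
  have iRe: "integrable lborel (\<lambda>\<omega>. Re (A1 \<omega>))" using iA1 by (rule integrable_Re)
  have iIm: "integrable lborel (\<lambda>\<omega>. Im (B1 \<omega>))" using iB1 by (rule integrable_Im)
  have iPN: "integrable lborel (\<lambda>\<omega>. P \<omega> * N2 \<omega>)"
    unfolding PNe using iSD iRe iIm by (intro Bochner_Integration.integrable_add Bochner_Integration.integrable_mult_right) auto
  have zSD: "integral\<^sup>L lborel (\<lambda>\<omega>. \<Sum>j\<in>UNIV. Dj j \<omega>) = 0"
    using Dj_zero by (subst Bochner_Integration.integral_sum) (auto intro: Dj_int)
  have IPN: "integral\<^sup>L lborel (\<lambda>\<omega>. P \<omega> * N2 \<omega>) = 2 * Re (integral\<^sup>L lborel A1) + 2 * Im (integral\<^sup>L lborel B1)"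
  proof -
    have "integral\<^sup>L lborel (\<lambda>\<omega>. P \<omega> * N2 \<omega>) = integral\<^sup>L lborel (\<lambda>\<omega>. \<Sum>j\<in>UNIV. Dj j \<omega>)
        + 2 * integral\<^sup>L lborel (\<lambda>\<omega>. Re (A1 \<omega>)) + 2 * integral\<^sup>L lborel (\<lambda>\<omega>. Im (B1 \<omega>))"
      unfolding PNe using iSD iRe iIm by simp
    also have "\<dots> = 2 * Re (integral\<^sup>L lborel A1) + 2 * Im (integral\<^sup>L lborel B1)"
      using zSD integral_Re[OF iA1] integral_Im[OF iB1] by simp
    finally show ?thesis .
  qed
  have "integral\<^sup>L lborel L1 \<le> integral\<^sup>L lborel (\<lambda>\<omega>. P \<omega> * N2 \<omega> + R1 \<omega>)"
    by (rule Bochner_Integration.integral_mono[OF L1_int]) (use iPN R1_int L1_le in auto)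
  also have "\<dots> = integral\<^sup>L lborel (\<lambda>\<omega>. P \<omega> * N2 \<omega>) + integral\<^sup>L lborel R1"
    using iPN R1_int by simp
  also have "\<dots> \<le> integral\<^sup>L lborel R1 + 2 * cmod (integral\<^sup>L lborel A1) + 2 * Im (integral\<^sup>L lborel B1)"
    unfolding IPN using complex_Re_le_cmod[of "integral\<^sup>L lborel A1"] by linarith
  finally show ?thesis unfolding eL eR eA eB .
qed

end

theorem lemma3p1:
  fixes u :: "real \<times> (real^'d::finite) \<Rightarrow> real^'d"
    and f chi :: "'d pt \<Rightarrow> real"
    and s r :: real
  assumes f: "smooth_compact_support f"
    and chi: "smooth_bounded chi" "\<And>\<omega>. chi \<omega> \<ge> 0"
    and s: "s \<ge> 0" and r: "r \<ge> 0"
    and u_int: "\<And>j. integrable lborel (\<lambda>p::'d pt. u (fst p, fst (snd p)) $ j * f p)"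
    and int1: "integrable lborel (\<lambda>(\<tau>, \<xi>, \<eta>).
       complex_of_real (chi (\<tau>, \<xi>, \<eta>) * (\<xi> \<bullet> \<eta>) * jbr \<xi> powr (2 * s - 2) * jbr \<eta> powr (- 2 * r))
       * (\<Sum>j\<in>UNIV. of_real (\<xi> $ j) * uconv u f j (\<tau>, \<xi>, \<eta>)) * cnj (fhat f (\<tau>, \<xi>, \<eta>)))"
    and int2: "integrable lborel (\<lambda>(\<tau>, \<xi>, \<eta>).
       complex_of_real (chi (\<tau>, \<xi>, \<eta>) * \<tau> * jbr \<tau> powr (2 * s - 2) * jbr \<eta> powr (- 2 * r))
       * (\<Sum>j\<in>UNIV. of_real (\<xi> $ j) * uconv u f j (\<tau>, \<xi>, \<eta>)) * cnj (fhat f (\<tau>, \<xi>, \<eta>)))"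
  shows
   "((LINT \<omega>|lborel. (case \<omega> of (\<tau>, \<xi>, \<eta>) \<Rightarrow>
        chi \<omega> * (norm \<xi>)\<^sup>2 * jbr \<xi> powr (2 * s - 2) * jbr \<eta> powr (- 2 - 2 * r)
        * (1 + (1 - 2 * r) * (norm \<eta>)\<^sup>2) * (cmod (fhat f \<omega>))\<^sup>2))
    \<le> (LINT \<omega>|lborel. (case \<omega> of (\<tau>, \<xi>, \<eta>) \<Rightarrow>
        norm (grad_eta chi \<omega>) * jbr \<xi> powr (2 * s) * jbr \<eta> powr (1 - 2 * r) * (cmod (fhat f \<omega>))\<^sup>2))
      + 2 * cmod (LINT \<omega>|lborel. (case \<omega> of (\<tau>, \<xi>, \<eta>) \<Rightarrow>
        complex_of_real (chi \<omega> * (\<xi> \<bullet> \<eta>) * jbr \<xi> powr (2 * s - 2) * jbr \<eta> powr (- 2 * r))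
        * Xop u f \<omega> * cnj (fhat f \<omega>)))
      + 2 * Im (LINT \<omega>|lborel. (case \<omega> of (\<tau>, \<xi>, \<eta>) \<Rightarrow>
        complex_of_real (chi \<omega> * (\<xi> \<bullet> \<eta>) * jbr \<xi> powr (2 * s - 2) * jbr \<eta> powr (- 2 * r))
        * (\<Sum>j\<in>UNIV. of_real (\<xi> $ j) * uconv u f j \<omega>) * cnj (fhat f \<omega>))))
   \<and>
   ((LINT \<omega>|lborel. (case \<omega> of (\<tau>, \<xi>, \<eta>) \<Rightarrow>
        chi \<omega> * \<bar>\<tau>\<bar>\<^sup>2 * jbr \<tau> powr (2 * s - 2) * jbr \<eta> powr (- 2 * r) * (cmod (fhat f \<omega>))\<^sup>2))
    = - Re (LINT \<omega>|lborel. (case \<omega> of (\<tau>, \<xi>, \<eta>) \<Rightarrow>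
        complex_of_real (chi \<omega> * \<tau> * jbr \<tau> powr (2 * s - 2) * jbr \<eta> powr (- 2 * r))
        * (\<Sum>j\<in>UNIV. of_real (\<xi> $ j) * vfhat f j \<omega>) * cnj (fhat f \<omega>)))
      + Im (LINT \<omega>|lborel. (case \<omega> of (\<tau>, \<xi>, \<eta>) \<Rightarrow>
        complex_of_real (chi \<omega> * \<tau> * jbr \<tau> powr (2 * s - 2) * jbr \<eta> powr (- 2 * r))
        * Xop u f \<omega> * cnj (fhat f \<omega>)))
      - Re (LINT \<omega>|lborel. (case \<omega> of (\<tau>, \<xi>, \<eta>) \<Rightarrow>
        complex_of_real (chi \<omega> * \<tau> * jbr \<tau> powr (2 * s - 2) * jbr \<eta> powr (- 2 * r))
        * (\<Sum>j\<in>UNIV. of_real (\<xi> $ j) * uconv u f j \<omega>) * cnj (fhat f \<omega>))))"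
  proof -
  interpret P: part1 f chi s r
    by unfold_locales (use f chi r in auto)
  show ?thesis using P.part1_main[OF int1] P.part2[OF int2] by blast
qed

end
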